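(* Let $p\ge3$ be prime. The complex $\cdots\xrightarrow{\hat d_3}\tilde{\mathcal P}_2\xrightarrow{\hat d_2}\tilde{\mathcal P}_1\xrightarrow{\hat d_1}\tilde{\mathcal P}_0\to0\to\cdots$ with $\tilde{\mathcal P}_i:=\tilde P_{\omega(i)}$ for $i\ge0$, $\tilde{\mathcal P}_i:=0$ for $i<0$, and $\hat d_i:=\hat e_{\omega(i-1),\omega(i)}:\tilde P_{\omega(i)}\to\tilde P_{\omega(i-1)}$ for $i\ge1$ ($\hat d_i=0$ for $i\le0$), is a projective resolution of the trivial $\mathbb{Z}_{(p)}\mathfrak{S}_p$-module $\mathbb{Z}_{(p)}$ with augmentation $\hat\varepsilon:\tilde{\mathcal P}_0=\tilde P_1\to\mathbb{Z}_{(p)}$; explicitly it is $\cdots\to\tilde P_2\xrightarrow{\hat e_{1,2}}\tilde P_1\xrightarrow{\hat e_{1,1}}\tilde P_1\xrightarrow{\hat e_{2,1}}\tilde P_2\to\cdots\to\tilde P_{p-2}\xrightarrow{\hat e_{p-1,p-2}}\tilde P_{p-1}\xrightarrow{\hat e_{p-1,p-1}}\tilde P_{p-1}\xrightarrow{\hat e_{p-2,p-1}}\tilde P_{p-2}\to\cdots\to\tilde P_2\xrightarrow{\hat e_{1,2}}\tilde P_1\to0$.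
   Context: Let $p\ge3$ be prime and $l:=2(p-1)$. For $i\in\mathbb{Z}$ write $i=jl+r$ with $j\in\mathbb{Z}$, $0\le r\le l-1$, and set $\omega(i):=r+1$ if $0\le r\le p-2$ and $\omega(i):=l-r$ if $p-1\le r\le l-1$. Notation $\mathbb{Z}_{(p)}$, $\Gamma$, $\Lambda$, $\tilde P_k$, $\hat e_{\ast,\ast}$, $\hat\varepsilon$ as follows. For $\lambda\vdash p$ let $n_\lambda$ be the rank of the Specht module $S^\lambda$; hooks $\lambda^k:=(p-k+1,1^{k-1})$, $n^k_{\rm b}:=\binom{p-2}{k-1}$, $n^k_{\rm c}:=\binom{p-2}{k-2}$. $\Gamma:=\prod_{\lambda\vdash p}\mathbb{Z}_{(p)}^{n_\lambda\times n_\lambda}$, with blocks $\rho^{\lambda^k}_{\rm cc}$ (upper-left $n^k_{\rm c}\times n^k_{\rm c}$), $\rho^{\lambda^k}_{\rm bc}$ (upper-right $n^k_{\rm c}\times n^k_{\rm b}$), $\rho^{\lambda^k}_{\rm bb}$ (lower-right $n^k_{\rm b}\times n^k_{\rm b}$). $\Lambda:=\{\rho\in\Gamma:\rho^{\lambda^k}_{\rm bb}\equiv\rho^{\lambda^{k+1}}_{\rm cc}\bmod p\ (k\in[1,p-1]),\ \rho^{\lambda^k}_{\rm bc}\equiv0\bmod p\ (k\in[1,p])\}$; there is a known $\mathbb{Z}_{(p)}$-algebra isomorphism $\mathbb{Z}_{(p)}\mathfrak{S}_p\cong\Lambda$ under which $\rho$ acts on the trivial module $\mathbb{Z}_{(p)}$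 by the scalar $\rho^{\lambda^1}$. $\eta_{\lambda,i,j}$ denotes the matrix unit in the $\lambda$-component. $\tilde e_k:=\eta_{\lambda^k,n^k_{\rm c}+1,n^k_{\rm c}+1}+\eta_{\lambda^{k+1},1,1}$, $\tilde P_k:=\tilde e_k\Lambda$ ($k\in[1,p-1]$). Maps given by left multiplication: $\hat e_{1,1}$ by $p\eta_{\lambda^1,1,1}$ on $\tilde P_1$; $\hat e_{p-1,p-1}$ by $p\eta_{\lambda^p,1,1}$ on $\tilde P_{p-1}$; for $k\in[1,p-2]$, $\hat e_{k+1,k}:\tilde P_k\to\tilde P_{k+1}$ by $\eta_{\lambda^{k+1},n^{k+1}_{\rm c}+1,1}$ and $\hat e_{k,k+1}:\tilde P_{k+1}\to\tilde P_k$ by $p\eta_{\lambda^{k+1},1,n^{k+1}_{\rm c}+1}$. $\hat\varepsilon:\tilde P_1\to\mathbb{Z}_{(p)}$, $\rho\mapsto\rho^{\lambda^1}$. *)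

theory Defs
  imports Complex_Main "HOL-Library.FuncSet" "HOL-Computational_Algebra.Primes"
begin

section \<open>The local ring Z_(p), realised inside the rationals\<close>

definition zp :: "nat \<Rightarrow> rat \<Rightarrow> bool" where
  "zp p q \<longleftrightarrow> coprime (snd (quotient_of q)) (int p)"

definition Zp :: "nat \<Rightarrow> rat set" where
  "Zp p = {q. zp p q}"

definition congp :: "nat \<Rightarrow> rat \<Rightarrow> rat \<Rightarrow> bool" where
  "congp p a b \<longleftrightarrow> zp p a \<and> zp p b \<and> zp p ((a - b) / of_nat p)"

definition partitions :: "nat \<Rightarrow> nat list set" where
  "partitions n = {lam. sum_list lam = n \<and> sorted_wrt (\<ge>) lam \<and> 0 \<notin> set lam}"

definition cells :: "nat list \<Rightarrow> (nat \<times> nat) set" where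
  "cells lam = {(i, j). i < length lam \<and> j < lam ! i}"

definition syt :: "nat list \<Rightarrow> ((nat \<times> nat) \<Rightarrow> nat) set" where
  "syt lam = {T \<in> cells lam \<rightarrow>\<^sub>E {1..sum_list lam}.
      bij_betw T (cells lam) {1..sum_list lam} \<and>
      (\<forall>i j i' j'. (i, j) \<in> cells lam \<longrightarrow> (i', j') \<in> cells lam \<longrightarrow>
         ((i = i' \<and> j < j') \<or> (j = j' \<and> i < i')) \<longrightarrow> T (i, j) < T (i', j'))}"

text \<open>rank n_lambda of the Specht module S^lambda = number of standard Young tableaux\<close>
definition nlam :: "nat list \<Rightarrow> nat" where
  "nlam lam = card (syt lam)"

definition hook :: "nat \<Rightarrow> nat \<Rightarrow> nat list" where
  "hook p k = (p - k + 1) # replicate (k - 1) 1"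

definition nb :: "nat \<Rightarrow> nat \<Rightarrow> nat" where
  "nb p k = (p - 2) choose (k - 1)"

definition nc :: "nat \<Rightarrow> nat \<Rightarrow> nat" where
  "nc p k = (if k < 2 then 0 else (p - 2) choose (k - 2))"

section \<open>The algebra Gamma and the order Lambda\<close>

text \<open>An element of Gamma: for every partition lam a matrix with 1-based indices,
  entries outside the n_lam x n_lam range (and components at non-partitions) being 0.\<close>
type_synonym gam = "nat list \<Rightarrow> nat \<Rightarrow> nat \<Rightarrow> rat"

definition inGamma :: "nat \<Rightarrow> gam \<Rightarrow> bool" where
  "inGamma p r \<longleftrightarrow>
     (\<forall>lam i j. r lam i j \<noteq> 0 \<longrightarrow>
        lam \<in> partitions p \<and> 1 \<le> i \<and> i \<le> nlam lam \<and> 1 \<le> j \<and> j \<le> nlam lam) \<and>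
     (\<forall>lam i j. zp p (r lam i j))"

definition gadd :: "gam \<Rightarrow> gam \<Rightarrow> gam" where
  "gadd r s = (\<lambda>lam i j. r lam i j + s lam i j)"

definition gzero :: gam where
  "gzero = (\<lambda>lam i j. 0)"

definition gmult :: "gam \<Rightarrow> gam \<Rightarrow> gam" where
  "gmult r s = (\<lambda>lam i j. \<Sum>k = 1..nlam lam. r lam i k * s lam k j)"

definition gone :: "nat \<Rightarrow> gam" where
  "gone p = (\<lambda>lam i j. if lam \<in> partitions p \<and> i = j \<and> 1 \<le> i \<and> i \<le> nlam lam then 1 else 0)"

definition gsmul :: "rat \<Rightarrow> gam \<Rightarrow> gam" where
  "gsmul c r = (\<lambda>lam i j. c * r lam i j)"

definition eta :: "nat list \<Rightarrow> nat \<Rightarrow> nat \<Rightarrow> gam" where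
  "eta mu a b = (\<lambda>lam i j. if lam = mu \<and> i = a \<and> j = b then 1 else 0)"

definition Lam :: "nat \<Rightarrow> gam set" where
  "Lam p = {r. inGamma p r \<and>
     (\<forall>k \<in> {1..p-1}. \<forall>i \<in> {1..nb p k}. \<forall>j \<in> {1..nb p k}.
        congp p (r (hook p k) (nc p k + i) (nc p k + j)) (r (hook p (k+1)) i j)) \<and>
     (\<forall>k \<in> {1..p}. \<forall>i \<in> {1..nc p k}. \<forall>j \<in> {nc p k + 1..nc p k + nb p k}.
        congp p (r (hook p k) i j) 0)}"

definition etilde :: "nat \<Rightarrow> nat \<Rightarrow> gam" where
  "etilde p k = gadd (eta (hook p k) (nc p k + 1) (nc p k + 1)) (eta (hook p (k+1)) 1 1)"

definition Ptilde :: "nat \<Rightarrow> nat \<Rightarrow> gam set" where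
  "Ptilde p k = {gmult (etilde p k) r | r. r \<in> Lam p}"

text \<open>ehat p a b : P~_b \<rightarrow> P~_a, given as the element of Gamma by which one multiplies on the left\<close>
definition ehat :: "nat \<Rightarrow> nat \<Rightarrow> nat \<Rightarrow> gam" where
  "ehat p a b =
    (if a = 1 \<and> b = 1 then gsmul (of_nat p) (eta (hook p 1) 1 1)
     else if a = p - 1 \<and> b = p - 1 then gsmul (of_nat p) (eta (hook p p) 1 1)
     else if 1 \<le> b \<and> b \<le> p - 2 \<and> a = b + 1 then eta (hook p (b+1)) (nc p (b+1) + 1) 1
     else if 1 \<le> a \<and> a \<le> p - 2 \<and> b = a + 1 then gsmul (of_nat p) (eta (hook p (a+1)) 1 (nc p (a+1) + 1))
     else gzero)"

text \<open>omega, on nonnegative indices (only i \<ge> 0 is used)\<close>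
definition omega :: "nat \<Rightarrow> nat \<Rightarrow> nat" where
  "omega p i = (let l = 2 * (p - 1); r = i mod l in if r \<le> p - 2 then r + 1 else l - r)"

definition dhat :: "nat \<Rightarrow> nat \<Rightarrow> gam" where
  "dhat p i = ehat p (omega p (i - 1)) (omega p i)"

text \<open>augmentation, and the trivial module Z_(p) (rho acts by the scalar rho^{lambda^1})\<close>
definition epshat :: "nat \<Rightarrow> gam \<Rightarrow> rat" where
  "epshat p r = r (hook p 1) 1 1"

definition trivact :: "nat \<Rightarrow> rat \<Rightarrow> gam \<Rightarrow> rat" where
  "trivact p x r = x * r (hook p 1) 1 1"

definition is_rmod :: "nat \<Rightarrow> 'm set \<Rightarrow> ('m \<Rightarrow> 'm \<Rightarrow> 'm) \<Rightarrow> 'm \<Rightarrow> ('m \<Rightarrow> gam \<Rightarrow> 'm) \<Rightarrow> bool" where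
  "is_rmod p M add z act \<longleftrightarrow>
     z \<in> M \<and>
     (\<forall>x\<in>M. \<forall>y\<in>M. add x y \<in> M) \<and>
     (\<forall>x\<in>M. \<forall>y\<in>M. \<forall>w\<in>M. add (add x y) w = add x (add y w)) \<and>
     (\<forall>x\<in>M. \<forall>y\<in>M. add x y = add y x) \<and>
     (\<forall>x\<in>M. add z x = x) \<and>
     (\<forall>x\<in>M. \<exists>y\<in>M. add x y = z) \<and>
     (\<forall>x\<in>M. \<forall>r\<in>Lam p. act x r \<in> M) \<and>
     (\<forall>x\<in>M. \<forall>r\<in>Lam p. \<forall>s\<in>Lam p. act x (gadd r s) = add (act x r) (act x s)) \<and>
     (\<forall>x\<in>M. \<forall>y\<in>M. \<forall>r\<in>Lam p. act (add x y) r = add (act x r) (act y r)) \<and>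
     (\<forall>x\<in>M. \<forall>r\<in>Lam p. \<forall>s\<in>Lam p. act x (gmult r s) = act (act x r) s) \<and>
     (\<forall>x\<in>M. act x (gone p) = x)"

definition is_rhom :: "nat \<Rightarrow> 'm set \<Rightarrow> ('m \<Rightarrow> 'm \<Rightarrow> 'm) \<Rightarrow> ('m \<Rightarrow> gam \<Rightarrow> 'm) \<Rightarrow>
    'n set \<Rightarrow> ('n \<Rightarrow> 'n \<Rightarrow> 'n) \<Rightarrow> ('n \<Rightarrow> gam \<Rightarrow> 'n) \<Rightarrow> ('m \<Rightarrow> 'n) \<Rightarrow> bool" where
  "is_rhom p M addM actM N addN actN f \<longleftrightarrow>
     (\<forall>x\<in>M. f x \<in> N) \<and>
     (\<forall>x\<in>M. \<forall>y\<in>M. f (addM x y) = addN (f x) (f y)) \<and>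
     (\<forall>x\<in>M. \<forall>r\<in>Lam p. f (actM x r) = actN (f x) r)"

text \<open>Projectivity: lifting property against every surjective homomorphism of right
  Lambda-modules whose carriers live in the type 'm (the type is a parameter, and the
  theorem is stated for an arbitrary type 'm).\<close>
definition projective_rmod :: "'m itself \<Rightarrow> nat \<Rightarrow> 'a set \<Rightarrow> ('a \<Rightarrow> 'a \<Rightarrow> 'a) \<Rightarrow> 'a \<Rightarrow>
    ('a \<Rightarrow> gam \<Rightarrow> 'a) \<Rightarrow> bool" where
  "projective_rmod T p P addP zP actP \<longleftrightarrow>
     is_rmod p P addP zP actP \<and>
     (\<forall>(A :: 'm set) addA zA actA (B :: 'm set) addB zB actB g f.
        is_rmod p A addA zA actA \<longrightarrow> is_rmod p B addB zB actB \<longrightarrow>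
        is_rhom p A addA actA B addB actB g \<longrightarrow> g ` A = B \<longrightarrow>
        is_rhom p P addP actP B addB actB f \<longrightarrow>
        (\<exists>h. is_rhom p P addP actP A addA actA h \<and> (\<forall>x\<in>P. g (h x) = f x)))"

end

theory Submission
  imports Defs
begin

lemma zp_iff: "zp p q \<longleftrightarrow> (\<exists>a b. b > 0 \<and> coprime b (int p) \<and> q = of_int a / of_int b)"
proof
  assume "zp p q"
  obtain a b where ab: "quotient_of q = (a, b)" by (cases "quotient_of q") auto
  show "\<exists>a b. b > 0 \<and> coprime b (int p) \<and> q = of_int a / of_int b"
    using \<open>zp p q\<close> ab quotient_of_denom_pos[OF ab] quotient_of_div[OF ab] unfolding zp_def by auto
next
  assume "\<exists>a b. b > 0 \<and> coprime b (int p) \<and> q = of_int a / of_int b"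
  then obtain a b where b: "b > 0" "coprime b (int p)" and q: "q = of_int a / of_int b" by auto
  obtain a' b' where ab: "quotient_of q = (a', b')" by (cases "quotient_of q") auto
  have b': "b' > 0" using quotient_of_denom_pos[OF ab] .
  have cop: "coprime a' b'" using quotient_of_coprime[OF ab] .
  have "of_int a' / of_int b' = (of_int a / of_int b :: rat)" using quotient_of_div[OF ab] q by simp
  hence "of_int (a' * b) = (of_int (a * b') :: rat)" using b b' by (simp add: field_simps)
  hence eq: "a' * b = a * b'" by (simp only: of_int_eq_iff)
  have "b' dvd a' * b" using eq by simp
  hence "b' dvd b" using cop by (simp add: coprime_commute coprime_dvd_mult_right_iff)
  then obtain k where "b = b' * k" by auto
  hence "coprime b' (int p)" using b(2) by simp
  thus "zp p q" unfolding zp_def using ab by simp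
qed

definition pz :: "nat \<Rightarrow> rat \<Rightarrow> bool" where "pz p q \<longleftrightarrow> zp p (q / of_nat p)"

lemma zp_add: "zp p x \<Longrightarrow> zp p y \<Longrightarrow> zp p (x + y)"
proof -
  assume "zp p x" "zp p y"
  then obtain a b c d where "b > 0" "coprime b (int p)" "x = of_int a / of_int b"
     "d > 0" "coprime d (int p)" "y = of_int c / of_int d" unfolding zp_iff by blast
  thus ?thesis unfolding zp_iff
    by (intro exI[of _ "a*d + c*b"] exI[of _ "b*d"]) (auto simp: field_simps)
qed

lemma zp_mult: "zp p x \<Longrightarrow> zp p y \<Longrightarrow> zp p (x * y)"
proof -
  assume "zp p x" "zp p y"
  then obtain a b c d where "b > 0" "coprime b (int p)" "x = of_int a / of_int b"
     "d > 0" "coprime d (int p)" "y = of_int c / of_int d" unfolding zp_iff by blast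
  thus ?thesis unfolding zp_iff
    by (intro exI[of _ "a*c"] exI[of _ "b*d"]) (auto simp: field_simps)
qed

lemma zp_of_int: "zp p (of_int a)"
  unfolding zp_iff by (intro exI[of _ a] exI[of _ 1]) auto

lemma zp_0[simp]: "zp p 0" using zp_of_int[of p 0] by simp
lemma zp_1[simp]: "zp p 1" using zp_of_int[of p 1] by simp
lemma zp_of_nat[simp]: "zp p (of_nat n)" using zp_of_int[of p "int n"] by simp

lemma zp_uminus: "zp p x \<Longrightarrow> zp p (- x)"
  using zp_mult[of p "-1" x] zp_of_int[of p "-1"] by simp

lemma zp_diff: "zp p x \<Longrightarrow> zp p y \<Longrightarrow> zp p (x - y)"
  using zp_add[of p x "-y"] zp_uminus[of p y] by simp

lemma zp_sum: "(\<And>i. i \<in> S \<Longrightarrow> zp p (f i)) \<Longrightarrow> zp p (sum f S)"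
  by (induction S rule: infinite_finite_induct) (auto intro: zp_add)

lemma pz_zp: "p > 0 \<Longrightarrow> pz p x \<Longrightarrow> zp p x"
  unfolding pz_def using zp_mult[of p "x / of_nat p" "of_nat p"] by simp

lemma pz_add: "pz p x \<Longrightarrow> pz p y \<Longrightarrow> pz p (x + y)"
  unfolding pz_def using zp_add[of p "x / of_nat p" "y / of_nat p"] by (simp add: add_divide_distrib)

lemma pz_uminus: "pz p x \<Longrightarrow> pz p (- x)"
  unfolding pz_def using zp_uminus[of p "x / of_nat p"] by simp

lemma pz_diff: "pz p x \<Longrightarrow> pz p y \<Longrightarrow> pz p (x - y)"
  using pz_add[of p x "-y"] pz_uminus[of p y] by simp

lemma pz_multl: "pz p x \<Longrightarrow> zp p y \<Longrightarrow> pz p (x * y)"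
  unfolding pz_def using zp_mult[of p "x / of_nat p" y] by simp

lemma pz_multr: "zp p y \<Longrightarrow> pz p x \<Longrightarrow> pz p (y * x)"
  using pz_multl[of p x y] by (simp add: mult.commute)

lemma pz_0[simp]: "pz p 0" unfolding pz_def by simp

lemma pz_sum: "(\<And>i. i \<in> S \<Longrightarrow> pz p (f i)) \<Longrightarrow> pz p (sum f S)"
  by (induction S rule: infinite_finite_induct) (auto intro: pz_add)

lemma pz_p: "p > 0 \<Longrightarrow> zp p x \<Longrightarrow> pz p (of_nat p * x)"
  unfolding pz_def by simp

lemma congp_iff: "congp p a b \<longleftrightarrow> zp p a \<and> zp p b \<and> pz p (a - b)"
  unfolding congp_def pz_def by simp

lemma congp_refl: "zp p a \<Longrightarrow> congp p a a" by (simp add: congp_iff)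
lemma congp_00[simp]: "congp p 0 0" by (simp add: congp_iff)


lemma cells_hookL: "(i, j) \<in> cells (a # replicate m 1) \<longleftrightarrow> (i = 0 \<and> j < a) \<or> (1 \<le> i \<and> i \<le> m \<and> j = 0)"
  unfolding cells_def by (cases i) auto

lemmas cells_hookL' = cells_hookL[unfolded One_nat_def]
declare cells_hookL[simp] cells_hookL'[simp]

lemma sl_hookL: "sum_list (a # replicate m 1) = a + m" by (simp add: sum_list_replicate)

lemma syt_props:
  assumes "T \<in> syt (a # replicate m 1)" "a \<ge> 1"
  shows "T \<in> cells (a # replicate m 1) \<rightarrow>\<^sub>E {1..a+m}"
    "bij_betw T (cells (a # replicate m 1)) {1..a+m}"
    "\<And>i i'. i < i' \<Longrightarrow> i' \<le> m \<Longrightarrow> T (i, 0) < T (i', 0)"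
    "\<And>j j'. j < j' \<Longrightarrow> j' < a \<Longrightarrow> T (0, j) < T (0, j')"
proof -
  show "T \<in> cells (a # replicate m 1) \<rightarrow>\<^sub>E {1..a+m}" "bij_betw T (cells (a # replicate m 1)) {1..a+m}"
    using assms unfolding syt_def sl_hookL by auto
  have mono: "\<And>i j i' j'. (i, j) \<in> cells (a # replicate m 1) \<Longrightarrow> (i', j') \<in> cells (a # replicate m 1) \<Longrightarrow>
         ((i = i' \<and> j < j') \<or> (j = j' \<and> i < i')) \<Longrightarrow> T (i, j) < T (i', j')"
    using assms unfolding syt_def by blast
  show "\<And>i i'. i < i' \<Longrightarrow> i' \<le> m \<Longrightarrow> T (i, 0) < T (i', 0)"
    by (rule mono) (use assms(2) in \<open>auto simp: cells_hookL\<close>)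
  show "\<And>j j'. j < j' \<Longrightarrow> j' < a \<Longrightarrow> T (0, j) < T (0, j')"
    by (rule mono) (auto simp: cells_hookL)
qed

definition colset :: "nat \<Rightarrow> ((nat \<times> nat) \<Rightarrow> nat) \<Rightarrow> nat set" where
  "colset m T = (\<lambda>i. T (i, 0)) ` {1..m}"

lemma cells_split: "cells (a # replicate m 1) = (\<lambda>j. (0, j)) ` {..<a} \<union> (\<lambda>i. (i, 0)) ` {1..m}"
  by (auto simp: cells_hookL image_iff)

lemma colset_target:
  assumes "T \<in> syt (a # replicate m 1)" "a \<ge> 1"
  shows "colset m T \<subseteq> {2..a+m} \<and> card (colset m T) = m"
proof -
  note P = syt_props[OF assms]
  have inj: "inj_on T (cells (a # replicate m 1))" using bij_betw_imp_inj_on[OF P(2)] .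
  have "inj_on (\<lambda>i. T (i, 0)) {1..m}"
  proof (rule inj_onI)
    fix x y assume "x \<in> {1..m}" "y \<in> {1..m}" "T (x, 0) = T (y, 0)"
    moreover have "(x, 0) \<in> cells (a # replicate m 1)" "(y, 0) \<in> cells (a # replicate m 1)" using \<open>x \<in> {1..m}\<close> \<open>y \<in> {1..m}\<close> by auto
    ultimately show "x = y" using inj_onD[OF inj, of "(x,0)" "(y,0)"] by blast
  qed
  hence c: "card (colset m T) = m" unfolding colset_def by (simp add: card_image)
  have "\<And>i. i \<in> {1..m} \<Longrightarrow> T (i, 0) \<in> {2..a+m}"
  proof -
    fix i assume i: "i \<in> {1..m}"
    have "(i,0) \<in> cells (a # replicate m 1)" "(0,0) \<in> cells (a # replicate m 1)" using i assms(2) by auto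
    hence "T (i, 0) \<in> {1..a+m}" "T (0,0) \<in> {1..a+m}" using PiE_mem[OF P(1)] by blast+
    moreover have "T (0, 0) < T (i, 0)" using P(3)[of 0 i] i by auto
    ultimately show "T (i, 0) \<in> {2..a+m}" by auto
  qed
  thus ?thesis using c unfolding colset_def by auto
qed

lemma set_aux: "(X::'a set) = A \<union> C \<Longrightarrow> A \<inter> C = {} \<Longrightarrow> X = S \<Longrightarrow> A = S - C" by blast

lemma rowset:
  assumes "T \<in> syt (a # replicate m 1)" "a \<ge> 1"
  shows "(\<lambda>j. T (0, j)) ` {..<a} = {1..a+m} - colset m T"
proof -
  note P = syt_props[OF assms]
  have inj: "inj_on T (cells (a # replicate m 1))" by (rule bij_betw_imp_inj_on[OF P(2)])
  have im: "T ` cells (a # replicate m 1) = {1..a+m}" by (rule bij_betw_imp_surj_on[OF P(2)])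
  have "T ` cells (a # replicate m 1) = (\<lambda>j. T (0, j)) ` {..<a} \<union> colset m T"
    unfolding cells_split colset_def image_Un image_image by simp
  moreover have "(\<lambda>j. T (0, j)) ` {..<a} \<inter> colset m T = {}"
  proof (rule ccontr)
    assume "(\<lambda>j. T (0, j)) ` {..<a} \<inter> colset m T \<noteq> {}"
    then obtain x where x: "x \<in> (\<lambda>j. T (0, j)) ` {..<a}" "x \<in> (\<lambda>i. T (i, 0)) ` {1..m}" unfolding colset_def by blast
    from x(1) obtain j where j: "j < a" "x = T (0, j)" by blast
    from x(2) obtain i where i: "i \<in> {1..m}" "x = T (i, 0)" by blast
    have ji: "j < a" "i \<in> {1..m}" "T (0, j) = T (i, 0)" using i j by auto
    have "(0, j) \<in> cells (a # replicate m 1)" "(i, 0) \<in> cells (a # replicate m 1)" using ji by auto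
    hence "(0, j) = (i, 0)" using inj_onD[OF inj, of "(0,j)" "(i,0)"] ji(3) by blast
    thus False using ji by auto
  qed
  ultimately show ?thesis using im set_aux by metis
qed

lemma list_determined:
  fixes f g :: "nat \<Rightarrow> nat"
  assumes "\<And>i i'. i < i' \<Longrightarrow> i' < n \<Longrightarrow> f i < f i'" "\<And>i i'. i < i' \<Longrightarrow> i' < n \<Longrightarrow> g i < g i'"
    "f ` {..<n} = g ` {..<n}" "k < n"
  shows "f k = g k"
proof -
  have sf: "sorted_wrt (<) (map f [0..<n])" using assms(1) by (auto simp: sorted_wrt_iff_nth_less)
  have sg: "sorted_wrt (<) (map g [0..<n])" using assms(2) by (auto simp: sorted_wrt_iff_nth_less)
  have "map f [0..<n] = map g [0..<n]"
    using sf sg assms(3) by (intro sorted_distinct_set_unique) (auto simp: strict_sorted_iff atLeast0LessThan)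
  thus ?thesis using assms(4) by (metis diff_zero length_upt map_eq_conv nth_mem set_upt atLeastLessThan_iff le0)
qed

lemma colset_inj:
  assumes "a \<ge> 1" shows "inj_on (colset m) (syt (a # replicate m 1))"
proof (rule inj_onI)
  fix T T' assume T: "T \<in> syt (a # replicate m 1)" and T': "T' \<in> syt (a # replicate m 1)"
    and eq: "colset m T = colset m T'"
  note P = syt_props[OF T assms] and P' = syt_props[OF T' assms]
  have reidx: "\<And>f :: nat \<Rightarrow> nat. (\<lambda>k. f (k+1)) ` {..<m} = f ` {1..m}"
  proof -
    fix f :: "nat \<Rightarrow> nat"
    have "{1..m} = (\<lambda>k. k+1) ` {..<m}"
    proof (rule set_eqI, rule iffI)
      fix x assume "x \<in> {1..m}" thus "x \<in> (\<lambda>k. k+1) ` {..<m}"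
        by (intro image_eqI[of _ _ "x-1"]) auto
    qed auto
    thus "(\<lambda>k. f (k+1)) ` {..<m} = f ` {1..m}" by (simp add: image_image)
  qed
  have col: "T (i, 0) = T' (i, 0)" if "1 \<le> i" "i \<le> m" for i
  proof -
    have im: "(\<lambda>k. T (k+1, 0)) ` {..<m} = (\<lambda>k. T' (k+1, 0)) ` {..<m}"
      using eq unfolding colset_def reidx[of "\<lambda>i. T (i, 0)"] reidx[of "\<lambda>i. T' (i, 0)"] .
    have "T ((i-1)+1, 0) = T' ((i-1)+1, 0)"
    proof (rule list_determined[where n=m and f="\<lambda>k. T (k+1, 0)" and g="\<lambda>k. T' (k+1, 0)"])
      show "\<And>i i'. i < i' \<Longrightarrow> i' < m \<Longrightarrow> T (i + 1, 0) < T (i' + 1, 0)" by (rule P(3)) auto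
      show "\<And>i i'. i < i' \<Longrightarrow> i' < m \<Longrightarrow> T' (i + 1, 0) < T' (i' + 1, 0)" by (rule P'(3)) auto
    qed (use im that in auto)
    thus ?thesis using that by simp
  qed
  have row: "T (0, j) = T' (0, j)" if "j < a" for j
  proof (rule list_determined[where n=a and f="\<lambda>j. T (0, j)" and g="\<lambda>j. T' (0, j)"])
    show "(\<lambda>j. T (0, j)) ` {..<a} = (\<lambda>j. T' (0, j)) ` {..<a}"
      unfolding rowset[OF T assms] rowset[OF T' assms] eq ..
  qed (use P(4) P'(4) that in auto)
  show "T = T'"
  proof
    fix x show "T x = T' x"
    proof (cases "x \<in> cells (a # replicate m 1)")
      case True then obtain i j where x: "x = (i, j)" by (cases x) auto
      have "(i = 0 \<and> j < a) \<or> (1 \<le> i \<and> i \<le> m \<and> j = 0)" using True x cells_hookL by metis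
      thus ?thesis proof
        assume "i = 0 \<and> j < a" thus ?thesis using row x by blast
      next
        assume "1 \<le> i \<and> i \<le> m \<and> j = 0" thus ?thesis using col x by blast
      qed
    next
      case False show ?thesis using PiE_arb[OF P(1) False] PiE_arb[OF P'(1) False] by simp
    qed
  qed
qed

lemma colset_surj:
  assumes a: "a \<ge> 1" and S: "S \<subseteq> {2..a+m}" "card S = m"
  shows "\<exists>T \<in> syt (a # replicate m 1). colset m T = S"
proof -
  define L where "L = a # replicate m 1"
  define R where "R = {1..a+m} - S"
  define cl where "cl = sorted_list_of_set S"
  define rl where "rl = sorted_list_of_set R"
  have finS: "finite S" using S(1) finite_subset by blast
  have finR: "finite R" unfolding R_def by simp
  have setcl: "set cl = S" unfolding cl_def using finS by simp
  have setrl: "set rl = R" unfolding rl_def using finR by simp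
  have lcl: "length cl = m" unfolding cl_def using S(2) by simp
  have SR: "S \<subseteq> {1..a+m}" using S(1) by auto
  have "card R = a" unfolding R_def using card_Diff_subset[OF finS SR] S(2) by simp
  hence lrl: "length rl = a" unfolding rl_def by simp
  have scl: "sorted_wrt (<) cl" unfolding cl_def by simp
  have srl: "sorted_wrt (<) rl" unfolding rl_def by simp
  have clmem: "cl ! k \<in> S" if "k < m" for k using that lcl setcl nth_mem by metis
  have rlmem: "rl ! j \<in> R" if "j < a" for j using that lrl setrl nth_mem by metis
  have clmono: "cl ! k < cl ! k'" if "k < k'" "k' < m" for k k'
    using sorted_wrt_nth_less[OF scl that(1)] that lcl by simp
  have rlmono: "rl ! j < rl ! j'" if "j < j'" "j' < a" for j j'
    using sorted_wrt_nth_less[OF srl that(1)] that lrl by simp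
  have oneR: "1 \<in> R" unfolding R_def using S(1) a by auto
  have rl0: "rl ! 0 = 1"
  proof -
    obtain k where k: "k < a" "rl ! k = 1" using oneR setrl lrl in_set_conv_nth by metis
    have "rl ! 0 \<ge> 1" using rlmem[of 0] a unfolding R_def by auto
    moreover have "k = 0"
    proof (rule ccontr)
      assume "k \<noteq> 0" hence "rl ! 0 < rl ! k" using rlmono[of 0 k] k by simp
      thus False using \<open>rl ! 0 \<ge> 1\<close> k by simp
    qed
    ultimately show ?thesis using k by simp
  qed
  define T where "T = (\<lambda>x. if x \<in> cells L then (if fst x = 0 then rl ! snd x else cl ! (fst x - 1)) else undefined)"
  have T0: "T (0, j) = rl ! j" if "j < a" for j unfolding T_def L_def using that by simp
  have Ti: "T (i, 0) = cl ! (i - 1)" if "1 \<le> i" "i \<le> m" for i unfolding T_def L_def using that by simp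
  have cellsL: "(i, j) \<in> cells L \<longleftrightarrow> (i = 0 \<and> j < a) \<or> (1 \<le> i \<and> i \<le> m \<and> j = 0)" for i j
    unfolding L_def by (rule cells_hookL)
  have Tin: "T x \<in> {1..a+m}" if "x \<in> cells L" for x
  proof -
    obtain i j where x: "x = (i, j)" by (cases x)
    have "(i = 0 \<and> j < a) \<or> (1 \<le> i \<and> i \<le> m \<and> j = 0)" using that x cellsL by blast
    thus ?thesis
    proof
      assume h: "i = 0 \<and> j < a" thus ?thesis using T0[of j] rlmem[of j] x unfolding R_def by auto
    next
      assume h: "1 \<le> i \<and> i \<le> m \<and> j = 0"
      hence "i - 1 < m" by arith
      hence "cl ! (i-1) \<in> S" by (rule clmem)
      thus ?thesis using Ti[of i] h x SR by auto
    qed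
  qed
  have ext: "T \<in> extensional (cells L)" unfolding T_def extensional_def by simp
  have PiE: "T \<in> cells L \<rightarrow>\<^sub>E {1..a+m}" using Tin ext by (simp add: PiE_iff)
  have imT: "T ` cells L = {1..a+m}"
  proof
    show "T ` cells L \<subseteq> {1..a+m}" using Tin by blast
    show "{1..a+m} \<subseteq> T ` cells L"
    proof
      fix y assume y: "y \<in> {1..a+m}"
      show "y \<in> T ` cells L"
      proof (cases "y \<in> S")
        case True then obtain k where k: "k < m" "cl ! k = y" using setcl lcl in_set_conv_nth by metis
        have "(k+1, 0) \<in> cells L" using k cellsL by simp
        moreover have "T (k+1, 0) = y" using Ti[of "k+1"] k by simp
        ultimately show ?thesis by (metis image_eqI)
      next
        case False hence "y \<in> R" using y unfolding R_def by blast
        then obtain j where j: "j < a" "rl ! j = y" using setrl lrl in_set_conv_nth by metis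
        have "(0, j) \<in> cells L" using j cellsL by simp
        moreover have "T (0, j) = y" using T0 j by simp
        ultimately show ?thesis by (metis image_eqI)
      qed
    qed
  qed
  have disj: "rl ! j \<noteq> cl ! k" if "j < a" "k < m" for j k
    using rlmem[OF that(1)] clmem[OF that(2)] unfolding R_def by (metis DiffD2)
  have injT: "inj_on T (cells L)"
  proof (rule inj_onI)
    fix x y assume x: "x \<in> cells L" and y: "y \<in> cells L" and eq: "T x = T y"
    obtain i j where xi: "x = (i, j)" by (cases x)
    obtain i' j' where yi: "y = (i', j')" by (cases y)
    have cx: "(i = 0 \<and> j < a) \<or> (1 \<le> i \<and> i \<le> m \<and> j = 0)" using x xi cellsL by blast
    have cy: "(i' = 0 \<and> j' < a) \<or> (1 \<le> i' \<and> i' \<le> m \<and> j' = 0)" using y yi cellsL by blast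
    have drl: "distinct rl" and dcl: "distinct cl" using srl scl strict_sorted_iff by blast+
    show "x = y"
    proof (cases "i = 0")
      case True
      show ?thesis
      proof (cases "i' = 0")
        case True
        have "rl ! j = rl ! j'" using eq T0 cx cy \<open>i = 0\<close> True xi yi by simp
        hence "j = j'" using nth_eq_iff_index_eq[OF drl] cx cy \<open>i = 0\<close> True lrl by simp
        thus ?thesis using xi yi True \<open>i = 0\<close> by simp
      next
        case False
        have "rl ! j = cl ! (i' - 1)" using eq T0 Ti cx cy \<open>i = 0\<close> False xi yi by simp
        moreover have "i' - 1 < m" "j < a" using cx cy \<open>i = 0\<close> False by arith+
        ultimately show ?thesis using disj[of j "i'-1"] by blast
      qed
    next
      case False
      show ?thesis
      proof (cases "i' = 0")
        case True
        have "cl ! (i - 1) = rl ! j'" using eq T0 Ti cx cy \<open>i \<noteq> 0\<close> True xi yi by simp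
        moreover have "i - 1 < m" "j' < a" using cx cy \<open>i \<noteq> 0\<close> True by arith+
        ultimately show ?thesis using disj[of j' "i-1"] by metis
      next
        case F2: False
        have "cl ! (i - 1) = cl ! (i' - 1)" using eq Ti cx cy \<open>i \<noteq> 0\<close> F2 xi yi by simp
        moreover have "i - 1 < length cl" "i' - 1 < length cl" using cx cy \<open>i \<noteq> 0\<close> F2 lcl by arith+
        ultimately have "i - 1 = i' - 1" using nth_eq_iff_index_eq[OF dcl] by blast
        thus ?thesis using xi yi cx cy \<open>i \<noteq> 0\<close> F2 by simp
      qed
    qed
  qed
  have monoT: "T (i, j) < T (i', j')" if c: "(i, j) \<in> cells L" "(i', j') \<in> cells L"
      and o: "(i = i' \<and> j < j') \<or> (j = j' \<and> i < i')" for i j i' j'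
  proof -
    have cx: "(i = 0 \<and> j < a) \<or> (1 \<le> i \<and> i \<le> m \<and> j = 0)" using c(1) cellsL by blast
    have cy: "(i' = 0 \<and> j' < a) \<or> (1 \<le> i' \<and> i' \<le> m \<and> j' = 0)" using c(2) cellsL by blast
    from o show ?thesis
    proof
      assume h: "i = i' \<and> j < j'"
      hence "i' = 0 \<and> j' < a" using cy by auto
      thus ?thesis using h T0 rlmono by simp
    next
      assume h: "j = j' \<and> i < i'"
      hence i': "1 \<le> i' \<and> i' \<le> m \<and> j' = 0" using cy by auto
      show ?thesis
      proof (cases "i = 0")
        case True
        have "T (i, j) = 1" using True h i' T0[of 0] a rl0 by simp
        moreover have "i' - 1 < m" using i' by arith
        hence "cl ! (i'-1) \<in> S" by (rule clmem)
        hence "T (i', j') \<ge> 2" using Ti[of i'] i' S(1) by auto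
        ultimately show ?thesis by simp
      next
        case False
        have "i - 1 < i' - 1" "i' - 1 < m" using h i' cx False by arith+
        thus ?thesis using h i' cx False Ti clmono[of "i-1" "i'-1"] by simp
      qed
    qed
  qed
  have m': "\<forall>i j i' j'. (i,j) \<in> cells L \<longrightarrow> (i',j') \<in> cells L \<longrightarrow> ((i = i' \<and> j < j') \<or> (j = j' \<and> i < i')) \<longrightarrow> T (i,j) < T (i',j')"
    using monoT by blast
  have bij: "bij_betw T (cells L) {1..a+m}" using injT imT by (simp add: bij_betw_def)
  have sl: "sum_list L = a+m" unfolding L_def by (rule sl_hookL)
  have "T \<in> syt L" unfolding syt_def sl mem_Collect_eq using PiE bij m' by (intro conjI)
  moreover have "colset m T = S"
  proof -
    have "colset m T = (\<lambda>i. cl ! (i - 1)) ` {1..m}" unfolding colset_def using Ti by simp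
    also have "\<dots> = (\<lambda>k. cl ! k) ` {..<m}"
    proof (rule set_eqI, rule iffI)
      fix x assume "x \<in> (\<lambda>i. cl ! (i - 1)) ` {1..m}"
      then obtain i where "i \<in> {1..m}" "x = cl ! (i - 1)" by blast
      thus "x \<in> (\<lambda>k. cl ! k) ` {..<m}" by (intro image_eqI[of _ _ "i-1"]) auto
    next
      fix x assume "x \<in> (\<lambda>k. cl ! k) ` {..<m}"
      then obtain k where "k < m" "x = cl ! k" by blast
      thus "x \<in> (\<lambda>i. cl ! (i - 1)) ` {1..m}" by (intro image_eqI[of _ _ "k+1"]) auto
    qed
    also have "\<dots> = set cl" using lcl by (auto simp: set_conv_nth)
    finally show ?thesis using setcl by simp
  qed
  ultimately show ?thesis unfolding L_def by blast
qed

lemma card_syt_hookL: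
  assumes "a \<ge> 1"
  shows "card (syt (a # replicate m 1)) = (a + m - 1) choose m"
proof -
  have "bij_betw (colset m) (syt (a # replicate m 1)) {S. S \<subseteq> {2..a+m} \<and> card S = m}"
    unfolding bij_betw_def
  proof
    show "inj_on (colset m) (syt (a # replicate m 1))" by (rule colset_inj[OF assms])
    show "colset m ` syt (a # replicate m 1) = {S. S \<subseteq> {2..a + m} \<and> card S = m}"
    proof
      show "colset m ` syt (a # replicate m 1) \<subseteq> {S. S \<subseteq> {2..a + m} \<and> card S = m}"
      proof
        fix S assume "S \<in> colset m ` syt (a # replicate m 1)"
        then obtain T where "T \<in> syt (a # replicate m 1)" "S = colset m T" by blast
        thus "S \<in> {S. S \<subseteq> {2..a + m} \<and> card S = m}" using colset_target[OF _ assms] by simp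
      qed
      show "{S. S \<subseteq> {2..a + m} \<and> card S = m} \<subseteq> colset m ` syt (a # replicate m 1)"
      proof
        fix S assume "S \<in> {S. S \<subseteq> {2..a + m} \<and> card S = m}"
        hence "S \<subseteq> {2..a + m}" "card S = m" by simp_all
        then obtain T where "T \<in> syt (a # replicate m 1)" "colset m T = S" using colset_surj[OF assms] by blast
        thus "S \<in> colset m ` syt (a # replicate m 1)" by (metis image_eqI)
      qed
    qed
  qed
  hence "card (syt (a # replicate m 1)) = card {S. S \<subseteq> {2..a+m} \<and> card S = m}"
    by (rule bij_betw_same_card)
  also have "\<dots> = card {2..a+m} choose m" by (rule n_subsets) simp
  also have "card {2..a+m} = a + m - 1" by simp
  finally show ?thesis .
qed


lemma gmult_assoc: "gmult (gmult r s) t = gmult r (gmult s t)"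
  unfolding gmult_def
  apply (rule ext)+ apply (simp add: sum_distrib_left sum_distrib_right mult.assoc)
  by (rule sum.swap)

lemma gmult_gadd_left: "gmult (gadd r s) x = gadd (gmult r x) (gmult s x)"
  unfolding gmult_def gadd_def by (rule ext)+ (simp add: distrib_right sum.distrib)

lemma gmult_gadd_right: "gmult x (gadd r s) = gadd (gmult x r) (gmult x s)"
  unfolding gmult_def gadd_def by (rule ext)+ (simp add: distrib_left sum.distrib)

lemma gmult_gsmul: "gmult (gsmul c r) x = gsmul c (gmult r x)"
  unfolding gmult_def gsmul_def by (rule ext)+ (simp add: sum_distrib_left mult.assoc)

lemma gmult_gzero: "gmult x gzero = gzero"
  unfolding gmult_def gzero_def by simp

lemma gadd_assoc: "gadd (gadd x y) w = gadd x (gadd y w)" unfolding gadd_def by (simp add: add.assoc)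
lemma gadd_comm: "gadd x y = gadd y x" unfolding gadd_def by (simp add: add.commute)
lemma gadd_zero: "gadd gzero x = x" unfolding gadd_def gzero_def by simp

lemma gmult_eta: "gmult (eta mu a b) x = (\<lambda>lam i j. if lam = mu \<and> i = a \<and> 1 \<le> b \<and> b \<le> nlam mu then x mu b j else 0)"
proof (rule ext)+
  fix lam i j
  have "gmult (eta mu a b) x lam i j = (\<Sum>k = 1..nlam lam. (if lam = mu \<and> i = a then (if k = b then x lam k j else 0) else 0))"
    unfolding gmult_def eta_def by (intro sum.cong) auto
  also have "\<dots> = (if lam = mu \<and> i = a \<and> 1 \<le> b \<and> b \<le> nlam mu then x mu b j else 0)"
    by (cases "lam = mu \<and> i = a") (auto simp: sum.delta')
  finally show "gmult (eta mu a b) x lam i j = (if lam = mu \<and> i = a \<and> 1 \<le> b \<and> b \<le> nlam mu then x mu b j else 0)" .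
qed

lemma gmult_gone:
  assumes "\<And>lam i j. x lam i j \<noteq> 0 \<Longrightarrow> lam \<in> partitions p \<and> 1 \<le> j \<and> j \<le> nlam lam"
  shows "gmult x (gone p) = x"
proof (rule ext)+
  fix lam i j
  have "gmult x (gone p) lam i j = (\<Sum>k = 1..nlam lam. (if k = j then (if lam \<in> partitions p then x lam i k else 0) else 0))"
    unfolding gmult_def gone_def by (intro sum.cong) auto
  also have "\<dots> = (if lam \<in> partitions p \<and> 1 \<le> j \<and> j \<le> nlam lam then x lam i j else 0)"
    by (simp add: sum.delta')
  also have "\<dots> = x lam i j" using assms[of lam i j] by auto
  finally show "gmult x (gone p) lam i j = x lam i j" .
qed

lemma hook_len: "k \<ge> 1 \<Longrightarrow> length (hook p k) = k" unfolding hook_def by simp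

lemma hook_inj: "a \<ge> 1 \<Longrightarrow> b \<ge> 1 \<Longrightarrow> hook p a = hook p b \<longleftrightarrow> a = b"
  using hook_len[of a p] hook_len[of b p] by metis

lemma nlam_hook: assumes "1 \<le> k" "k \<le> p" shows "nlam (hook p k) = nc p k + nb p k"
proof -
  have "nlam (hook p k) = ((p - k + 1) + (k - 1) - 1) choose (k - 1)"
    unfolding nlam_def hook_def by (rule card_syt_hookL) simp
  also have "(p - k + 1) + (k - 1) - 1 = p - 1" using assms by simp
  finally have e: "nlam (hook p k) = (p - 1) choose (k - 1)" .
  show ?thesis
  proof (cases "k = 1")
    case True thus ?thesis using e unfolding nc_def nb_def by simp
  next
    case False
    hence "p - 1 = Suc (p - 2)" "k - 1 = Suc (k - 2)" using assms by auto
    hence "((p - 1) choose (k - 1)) = ((p - 2) choose (k - 2)) + ((p - 2) choose (k - 1))"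
      by (metis binomial_Suc_Suc)
    thus ?thesis using e False assms unfolding nc_def nb_def by simp
  qed
qed

lemma hook_part: assumes "1 \<le> k" "k \<le> p" shows "hook p k \<in> partitions p"
proof -
  have "sum_list (hook p k) = p" unfolding hook_def using assms by (simp add: sum_list_replicate)
  moreover have "sorted_wrt (\<ge>) (replicate n (1::nat))" for n by (induction n) auto
  hence "sorted_wrt (\<ge>) (hook p k)" unfolding hook_def using assms by simp
  moreover have "0 \<notin> set (hook p k)" unfolding hook_def using assms by auto
  ultimately show ?thesis unfolding partitions_def by simp
qed

lemma nc_Suc: "k \<ge> 1 \<Longrightarrow> nc p (Suc k) = nb p k" unfolding nc_def nb_def by auto
lemma nb_pos: assumes "1 \<le> k" "k \<le> p - 1" shows "nb p k \<ge> 1"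
proof -
  have "k - 1 \<le> p - 2" using assms by arith
  from zero_less_binomial[OF this] show ?thesis unfolding nb_def by linarith
qed
lemma nc_pos: assumes "2 \<le> k" "k \<le> p" shows "nc p k \<ge> 1"
proof -
  have "k - 2 \<le> p - 2" using assms by arith
  thus ?thesis unfolding nc_def using assms by (simp add: Suc_le_eq)
qed
lemma nb_p: "p \<ge> 2 \<Longrightarrow> nb p p = 0" unfolding nb_def by simp
lemma nc_1: "nc p 1 = 0" unfolding nc_def by simp
lemma nb_1: "nb p 1 = 1" unfolding nb_def by simp
lemma nb_pm1: assumes "p \<ge> 2" shows "nb p (p - 1) = 1"
proof -
  have "p - 1 - 1 = p - 2" by arith
  thus ?thesis unfolding nb_def by simp
qed
lemma nc_p: "p \<ge> 2 \<Longrightarrow> nc p p = 1" unfolding nc_def by simp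


definition mk :: "nat \<Rightarrow> nat \<Rightarrow> (nat \<Rightarrow> rat) \<Rightarrow> (nat \<Rightarrow> rat) \<Rightarrow> gam" where
  "mk p c A B = (\<lambda>lam i j.
     if lam = hook p c \<and> i = nc p c + 1 \<and> 1 \<le> j \<and> j \<le> nlam (hook p c) then A j
     else if lam = hook p (c+1) \<and> i = 1 \<and> 1 \<le> j \<and> j \<le> nlam (hook p (c+1)) then B j else 0)"

definition Pc :: "nat \<Rightarrow> nat \<Rightarrow> (nat \<Rightarrow> rat) \<Rightarrow> (nat \<Rightarrow> rat) \<Rightarrow> bool" where
  "Pc p c A B \<longleftrightarrow> (\<forall>j\<in>{1..nlam (hook p c)}. zp p (A j)) \<and> (\<forall>j\<in>{1..nlam (hook p (c+1))}. zp p (B j)) \<and>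
     (\<forall>j\<in>{1..nb p c}. congp p (A (nc p c + j)) (B j)) \<and>
     (\<forall>j\<in>{1..nb p (c+1)}. congp p (B (nc p (c+1) + j)) 0)"

locale PP = fixes p :: nat assumes p3: "3 \<le> p"
begin

lemma Nc: assumes "1 \<le> c" "c \<le> p - 1"
  shows "nlam (hook p c) = nc p c + nb p c" "nlam (hook p (c+1)) = nb p c + nb p (c+1)"
    "nc p (c+1) = nb p c" "nb p c \<ge> 1" "hook p c \<noteq> hook p (c+1)"
proof -
  show "nlam (hook p c) = nc p c + nb p c" using nlam_hook assms by simp
  show "nc p (c+1) = nb p c" using nc_Suc assms by simp
  thus "nlam (hook p (c+1)) = nb p c + nb p (c+1)" using nlam_hook[of "c+1" p] assms by simp
  show "nb p c \<ge> 1" using nb_pos assms by simp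
  show "hook p c \<noteq> hook p (c+1)" using hook_inj[of c "c+1" p] assms by simp
qed

lemma mk_nz: "mk p c A B lam i j \<noteq> 0 \<Longrightarrow>
   (lam = hook p c \<and> i = nc p c + 1 \<and> 1 \<le> j \<and> j \<le> nlam (hook p c)) \<or>
   (lam = hook p (c+1) \<and> i = 1 \<and> 1 \<le> j \<and> j \<le> nlam (hook p (c+1)))"
  unfolding mk_def by (simp split: if_splits)

lemma mk_A: "1 \<le> j \<Longrightarrow> j \<le> nlam (hook p c) \<Longrightarrow> mk p c A B (hook p c) (nc p c + 1) j = A j"
  unfolding mk_def by simp

lemma mk_B: "1 \<le> c \<Longrightarrow> c \<le> p - 1 \<Longrightarrow> 1 \<le> j \<Longrightarrow> j \<le> nlam (hook p (c+1)) \<Longrightarrow> mk p c A B (hook p (c+1)) 1 j = B j"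
  using Nc(5)[of c] unfolding mk_def by auto

lemma mk_cong: "(\<And>j. 1 \<le> j \<Longrightarrow> j \<le> nlam (hook p c) \<Longrightarrow> A j = A' j) \<Longrightarrow>
   (\<And>j. 1 \<le> j \<Longrightarrow> j \<le> nlam (hook p (c+1)) \<Longrightarrow> B j = B' j) \<Longrightarrow> mk p c A B = mk p c A' B'"
  unfolding mk_def by (intro ext) auto

lemma mk_zero: "mk p c (\<lambda>_. 0) (\<lambda>_. 0) = gzero" unfolding mk_def gzero_def by (intro ext) simp

lemma mk_eq_zero: assumes "1 \<le> c" "c \<le> p - 1" "mk p c A B = gzero"
  shows "\<And>j. 1 \<le> j \<Longrightarrow> j \<le> nlam (hook p c) \<Longrightarrow> A j = 0"
        "\<And>j. 1 \<le> j \<Longrightarrow> j \<le> nlam (hook p (c+1)) \<Longrightarrow> B j = 0"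
proof -
  fix j assume "1 \<le> j" "j \<le> nlam (hook p c)"
  thus "A j = 0" using mk_A[of j c A B] assms(3) unfolding gzero_def by simp
next
  fix j assume "1 \<le> j" "j \<le> nlam (hook p (c+1))"
  thus "B j = 0" using mk_B[of c j A B] assms unfolding gzero_def by simp
qed

lemma mk_add: "gadd (mk p c A B) (mk p c A' B') = mk p c (\<lambda>j. A j + A' j) (\<lambda>j. B j + B' j)"
  unfolding mk_def gadd_def by (intro ext) auto

lemma etilde_mult:
  assumes c: "1 \<le> c" "c \<le> p - 1" and r: "\<And>lam i j. r lam i j \<noteq> 0 \<Longrightarrow> 1 \<le> j \<and> j \<le> nlam lam"
  shows "gmult (etilde p c) r = mk p c (r (hook p c) (nc p c + 1)) (r (hook p (c+1)) 1)"
proof (intro ext)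
  fix lam i j
  note N = Nc[OF c]
  have "gmult (etilde p c) r lam i j =
     (if lam = hook p c \<and> i = nc p c + 1 then r (hook p c) (nc p c + 1) j else 0) +
     (if lam = hook p (c+1) \<and> i = 1 then r (hook p (c+1)) 1 j else 0)"
    unfolding etilde_def gmult_gadd_left unfolding gmult_eta gadd_def using N by simp
  also have "\<dots> = mk p c (r (hook p c) (nc p c + 1)) (r (hook p (c+1)) 1) lam i j"
    unfolding mk_def using N r[of "hook p c" "nc p c + 1" j] r[of "hook p (c+1)" 1 j] by auto
  finally show "gmult (etilde p c) r lam i j = mk p c (r (hook p c) (nc p c + 1)) (r (hook p (c+1)) 1) lam i j" .
qed

end

context PP begin

lemma mk_zp: assumes "Pc p c A B" shows "zp p (mk p c A B lam i j)"
  using assms unfolding mk_def Pc_def by auto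

lemma mk_in_Lam:
  assumes c: "1 \<le> c" "c \<le> p - 1" and P: "Pc p c A B"
  shows "mk p c A B \<in> Lam p"
proof -
  note N = Nc[OF c]
  let ?x = "mk p c A B"
  have PA: "\<And>j. j \<in> {1..nb p c} \<Longrightarrow> congp p (A (nc p c + j)) (B j)"
   and PB: "\<And>j. j \<in> {1..nb p (c+1)} \<Longrightarrow> congp p (B (nc p (c+1) + j)) 0" using P unfolding Pc_def by auto
  have hinj: "\<And>a b. 1 \<le> a \<Longrightarrow> 1 \<le> b \<Longrightarrow> hook p a = hook p b \<longleftrightarrow> a = b" by (rule hook_inj)
  have g1: "lam \<in> partitions p \<and> 1 \<le> i \<and> i \<le> nlam lam \<and> 1 \<le> j \<and> j \<le> nlam lam" if nz: "?x lam i j \<noteq> 0" for lam i j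
    using mk_nz[OF nz]
  proof
    assume h: "lam = hook p c \<and> i = nc p c + 1 \<and> 1 \<le> j \<and> j \<le> nlam (hook p c)"
    thus ?thesis using hook_part[of c p] c N by auto
  next
    assume h: "lam = hook p (c+1) \<and> i = 1 \<and> 1 \<le> j \<and> j \<le> nlam (hook p (c+1))"
    thus ?thesis using hook_part[of "c+1" p] c N by auto
  qed
  have gam: "inGamma p ?x" unfolding inGamma_def using g1 mk_zp[OF P] by blast
  have c1: "congp p (?x (hook p k) (nc p k + i) (nc p k + j)) (?x (hook p (k+1)) i j)"
    if k: "k \<in> {1..p-1}" and i: "i \<in> {1..nb p k}" and j: "j \<in> {1..nb p k}" for k i j
  proof (cases "k = c \<and> i = 1")
    case True
    have "?x (hook p k) (nc p k + i) (nc p k + j) = A (nc p c + j)"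
      using True mk_A[of "nc p c + j" c A B] j N by simp
    moreover have "?x (hook p (k+1)) i j = B j" using True mk_B[OF c, of j A B] j N by simp
    ultimately show ?thesis using PA[of j] True j by simp
  next
    case False
    have l: "?x (hook p k) (nc p k + i) (nc p k + j) = 0"
    proof (rule ccontr)
      assume "?x (hook p k) (nc p k + i) (nc p k + j) \<noteq> 0"
      from mk_nz[OF this] show False
      proof
        assume "hook p k = hook p c \<and> nc p k + i = nc p c + 1 \<and> 1 \<le> nc p k + j \<and> nc p k + j \<le> nlam (hook p c)"
        hence "k = c" "i = 1" using hinj[of k c] k c by auto
        thus False using False by simp
      next
        assume h: "hook p k = hook p (c+1) \<and> nc p k + i = 1 \<and> 1 \<le> nc p k + j \<and> nc p k + j \<le> nlam (hook p (c+1))"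
        hence "k = c + 1" using hinj[of k "c+1"] k c by auto
        hence "nc p k \<ge> 1" using nc_pos[of k p] c by simp
        thus False using h i by simp
      qed
    qed
    have r: "?x (hook p (k+1)) i j = 0"
    proof (rule ccontr)
      assume "?x (hook p (k+1)) i j \<noteq> 0"
      from mk_nz[OF this] show False
      proof
        assume h: "hook p (k+1) = hook p c \<and> i = nc p c + 1 \<and> 1 \<le> j \<and> j \<le> nlam (hook p c)"
        hence "k + 1 = c" using hinj[of "k+1" c] k c by auto
        hence "nc p c = nb p k" using nc_Suc[of k p] k by simp
        thus False using h i by simp
      next
        assume h: "hook p (k+1) = hook p (c+1) \<and> i = 1 \<and> 1 \<le> j \<and> j \<le> nlam (hook p (c+1))"
        hence "k = c" using hinj[of "k+1" "c+1"] k c by auto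
        thus False using False h by simp
      qed
    qed
    show ?thesis using l r by simp
  qed
  have c2: "congp p (?x (hook p k) i j) 0"
    if k: "k \<in> {1..p}" and i: "i \<in> {1..nc p k}" and j: "j \<in> {nc p k + 1..nc p k + nb p k}" for k i j
  proof (cases "k = c + 1 \<and> i = 1")
    case True
    have jr: "1 \<le> j" "j \<le> nlam (hook p (c+1))" using j True nlam_hook[of k p] k by auto
    have "?x (hook p k) i j = B j" using True mk_B[OF c jr] by simp
    moreover have "j = nc p (c+1) + (j - nc p (c+1))" "j - nc p (c+1) \<in> {1..nb p (c+1)}" using j True by auto
    ultimately show ?thesis using PB[of "j - nc p (c+1)"] by metis
  next
    case False
    have "?x (hook p k) i j = 0"
    proof (rule ccontr)
      assume "?x (hook p k) i j \<noteq> 0"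
      from mk_nz[OF this] show False
      proof
        assume h: "hook p k = hook p c \<and> i = nc p c + 1 \<and> 1 \<le> j \<and> j \<le> nlam (hook p c)"
        hence "k = c" using hinj[of k c] k c by auto
        thus False using h i by simp
      next
        assume h: "hook p k = hook p (c+1) \<and> i = 1 \<and> 1 \<le> j \<and> j \<le> nlam (hook p (c+1))"
        hence "k = c+1" using hinj[of k "c+1"] k c by auto
        thus False using h False by simp
      qed
    qed
    thus ?thesis by simp
  qed
  show ?thesis unfolding Lam_def using gam c1 c2 by blast
qed

end

lemma sum_split: "sum f {1..(a::nat)+b} = sum f {1..a} + (\<Sum>i=1..b. f (a + i)) "
proof (induction b)
  case 0 thus ?case by simp
next
  case (Suc b)
  have "sum f {1..a + Suc b} = sum f {1..a+b} + f (a + Suc b)" by simp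
  thus ?case using Suc by (simp add: add.assoc)
qed

lemma Lam_props:
  assumes "r \<in> Lam p"
  shows "\<And>lam i j. r lam i j \<noteq> 0 \<Longrightarrow> 1 \<le> j \<and> j \<le> nlam lam"
    "\<And>lam i j. zp p (r lam i j)"
    "\<And>k i j. k \<in> {1..p-1} \<Longrightarrow> i \<in> {1..nb p k} \<Longrightarrow> j \<in> {1..nb p k} \<Longrightarrow>
        congp p (r (hook p k) (nc p k + i) (nc p k + j)) (r (hook p (k+1)) i j)"
    "\<And>k i j. k \<in> {1..p} \<Longrightarrow> i \<in> {1..nc p k} \<Longrightarrow> j \<in> {nc p k + 1..nc p k + nb p k} \<Longrightarrow>
        congp p (r (hook p k) i j) 0"
  using assms unfolding Lam_def inGamma_def by blast+

context PP begin

lemmas mk_A' = mk_A[simplified]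
lemma mk_B': "1 \<le> c \<Longrightarrow> c \<le> p - 1 \<Longrightarrow> Suc 0 \<le> j \<Longrightarrow> j \<le> nlam (hook p (Suc c)) \<Longrightarrow> mk p c A B (hook p (Suc c)) (Suc 0) j = B j"
  using mk_B[of c j A B] by simp

lemma P_char: assumes c: "1 \<le> c" "c \<le> p - 1"
  shows "Ptilde p c = {mk p c A B | A B. Pc p c A B}"
proof
  note N = Nc[OF c]
  show "Ptilde p c \<subseteq> {mk p c A B | A B. Pc p c A B}"
  proof
    fix x assume "x \<in> Ptilde p c"
    then obtain r where r: "r \<in> Lam p" "x = gmult (etilde p c) r" unfolding Ptilde_def by blast
    note L = Lam_props[OF r(1)]
    have x: "x = mk p c (r (hook p c) (nc p c + 1)) (r (hook p (c+1)) 1)"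
      using r(2) etilde_mult[OF c L(1)] by simp
    have "Pc p c (r (hook p c) (nc p c + 1)) (r (hook p (c+1)) 1)"
      unfolding Pc_def
    proof (intro conjI ballI)
      show "zp p (r (hook p c) (nc p c + 1) j)" for j by (rule L(2))
      show "zp p (r (hook p (c+1)) 1 j)" for j by (rule L(2))
      fix j assume j: "j \<in> {1..nb p c}"
      show "congp p (r (hook p c) (nc p c + 1) (nc p c + j)) (r (hook p (c + 1)) 1 j)"
        using L(3)[of c 1 j] j c N by simp
    next
      fix j assume j: "j \<in> {1..nb p (c+1)}"
      show "congp p (r (hook p (c + 1)) 1 (nc p (c + 1) + j)) 0"
        using L(4)[of "c+1" 1 "nc p (c+1) + j"] j c N by simp
    qed
    thus "x \<in> {mk p c A B | A B. Pc p c A B}" using x by blast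
  qed
  show "{mk p c A B | A B. Pc p c A B} \<subseteq> Ptilde p c"
  proof
    fix x assume "x \<in> {mk p c A B | A B. Pc p c A B}"
    then obtain A B where x: "x = mk p c A B" and P: "Pc p c A B" by blast
    have inL: "mk p c A B \<in> Lam p" by (rule mk_in_Lam[OF c P])
    have "gmult (etilde p c) (mk p c A B) = mk p c (mk p c A B (hook p c) (nc p c + 1)) (mk p c A B (hook p (c+1)) 1)"
      by (rule etilde_mult[OF c Lam_props(1)[OF inL]])
    also have "\<dots> = mk p c A B"
    proof (rule mk_cong)
      fix j assume "1 \<le> j" "j \<le> nlam (hook p c)"
      thus "mk p c A B (hook p c) (nc p c + 1) j = A j" by (rule mk_A)
    next
      fix j assume "1 \<le> j" "j \<le> nlam (hook p (c+1))"
      thus "mk p c A B (hook p (c+1)) 1 j = B j" by (rule mk_B[OF c])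
    qed
    finally have eq: "gmult (etilde p c) (mk p c A B) = mk p c A B" .
    show "x \<in> Ptilde p c" unfolding Ptilde_def x using inL eq[symmetric] by blast
  qed
qed

lemma mk_mult:
  assumes c: "1 \<le> c" "c \<le> p - 1" and r: "r \<in> Lam p"
  shows "gmult (mk p c A B) r = mk p c (\<lambda>j. \<Sum>m=1..nlam (hook p c). A m * r (hook p c) m j)
                                        (\<lambda>j. \<Sum>m=1..nlam (hook p (c+1)). B m * r (hook p (c+1)) m j)"
proof (intro ext)
  fix lam i j
  note N = Nc[OF c]
  note L = Lam_props[OF r]
  show "gmult (mk p c A B) r lam i j = mk p c (\<lambda>j. \<Sum>m=1..nlam (hook p c). A m * r (hook p c) m j)
                                        (\<lambda>j. \<Sum>m=1..nlam (hook p (c+1)). B m * r (hook p (c+1)) m j) lam i j"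
  proof (cases "lam = hook p c \<and> i = nc p c + 1")
    case True
    have "gmult (mk p c A B) r lam i j = (\<Sum>m=1..nlam (hook p c). A m * r (hook p c) m j)"
      unfolding gmult_def using True by (intro sum.cong) (auto simp: mk_A')
    moreover have "(\<Sum>m=1..nlam (hook p c). A m * r (hook p c) m j) = 0" if "\<not> (1 \<le> j \<and> j \<le> nlam (hook p c))"
      using L(1)[of "hook p c" _ j] that by (intro sum.neutral) auto
    ultimately show ?thesis using True unfolding mk_def by auto
  next
    case F1: False
    show ?thesis
    proof (cases "lam = hook p (c+1) \<and> i = 1")
      case True
      have "gmult (mk p c A B) r lam i j = (\<Sum>m=1..nlam (hook p (c+1)). B m * r (hook p (c+1)) m j)"
        unfolding gmult_def using True by (intro sum.cong) (auto simp: mk_B'[OF c])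
      moreover have "(\<Sum>m=1..nlam (hook p (c+1)). B m * r (hook p (c+1)) m j) = 0" if "\<not> (1 \<le> j \<and> j \<le> nlam (hook p (c+1)))"
        using L(1)[of "hook p (c+1)" _ j] that by (intro sum.neutral) auto
      ultimately show ?thesis using True F1 unfolding mk_def by auto
    next
      case False
      have "gmult (mk p c A B) r lam i j = 0"
        unfolding gmult_def using F1 False mk_nz[of c A B lam i] by (intro sum.neutral) auto
      thus ?thesis using F1 False unfolding mk_def by auto
    qed
  qed
qed

end

context PP begin

lemma mk_mult_Pc:
  assumes c: "1 \<le> c" "c \<le> p - 1" and r: "r \<in> Lam p" and P: "Pc p c A B"
  shows "Pc p c (\<lambda>j. \<Sum>m=1..nlam (hook p c). A m * r (hook p c) m j)
                (\<lambda>j. \<Sum>m=1..nlam (hook p (c+1)). B m * r (hook p (c+1)) m j)"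
proof -
  note N = Nc[OF c]
  note L = Lam_props[OF r]
  define n1 where "n1 = nc p c"
  define n2 where "n2 = nb p c"
  define n3 where "n3 = nb p (c+1)"
  define h1 where "h1 = hook p c"
  define h2 where "h2 = hook p (c+1)"
  have N1: "nlam h1 = n1 + n2" and N2: "nlam h2 = n2 + n3" and nc2: "nc p (c+1) = n2"
    unfolding n1_def n2_def n3_def h1_def h2_def using N by simp_all
  have zA: "\<And>j. j \<in> {1..n1+n2} \<Longrightarrow> zp p (A j)" and zB: "\<And>j. j \<in> {1..n2+n3} \<Longrightarrow> zp p (B j)"
    using P N1 N2 unfolding Pc_def h1_def h2_def by auto
  have PA: "\<And>j. j \<in> {1..n2} \<Longrightarrow> congp p (A (n1 + j)) (B j)"
   and PB: "\<And>j. j \<in> {1..n3} \<Longrightarrow> congp p (B (n2 + j)) 0"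
    using P nc2 unfolding Pc_def n1_def n2_def n3_def by auto
  have R1: "\<And>i j. i \<in> {1..n2} \<Longrightarrow> j \<in> {1..n2} \<Longrightarrow> congp p (r h1 (n1 + i) (n1 + j)) (r h2 i j)"
    using L(3)[of c] c unfolding n1_def n2_def h1_def h2_def by auto
  have R2: "\<And>i j. i \<in> {1..n1} \<Longrightarrow> j \<in> {1..n2} \<Longrightarrow> pz p (r h1 i (n1 + j))"
  proof -
    fix i j assume "i \<in> {1..n1}" "j \<in> {1..n2}"
    hence "congp p (r h1 i (n1 + j)) 0" using L(4)[of c i "n1 + j"] c unfolding n1_def n2_def h1_def by auto
    thus "pz p (r h1 i (n1 + j))" by (simp add: congp_iff)
  qed
  have R3: "\<And>i j. i \<in> {1..n2} \<Longrightarrow> j \<in> {1..n3} \<Longrightarrow> pz p (r h2 i (n2 + j))"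
  proof -
    fix i j assume "i \<in> {1..n2}" "j \<in> {1..n3}"
    hence "congp p (r h2 i (n2 + j)) 0" using L(4)[of "c+1" i "n2 + j"] c nc2 unfolding n2_def n3_def h2_def by auto
    thus "pz p (r h2 i (n2 + j))" by (simp add: congp_iff)
  qed
  have pB: "\<And>j. j \<in> {1..n3} \<Longrightarrow> pz p (B (n2 + j))" using PB by (simp add: congp_iff)
  define A' where "A' = (\<lambda>j. \<Sum>m=1..n1+n2. A m * r h1 m j)"
  define B' where "B' = (\<lambda>j. \<Sum>m=1..n2+n3. B m * r h2 m j)"
  have zA': "zp p (A' j)" for j unfolding A'_def by (intro zp_sum zp_mult zA L(2)) auto
  have zB': "zp p (B' j)" for j unfolding B'_def by (intro zp_sum zp_mult zB L(2)) auto
  have C1: "congp p (A' (n1 + j)) (B' j)" if j: "j \<in> {1..n2}" for j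
  proof -
    have a: "A' (n1 + j) = (\<Sum>m=1..n1. A m * r h1 m (n1 + j)) + (\<Sum>i=1..n2. A (n1 + i) * r h1 (n1 + i) (n1 + j))"
      unfolding A'_def by (rule sum_split)
    have b: "B' j = (\<Sum>i=1..n2. B i * r h2 i j) + (\<Sum>i=1..n3. B (n2 + i) * r h2 (n2 + i) j)"
      unfolding B'_def by (rule sum_split)
    have p1: "pz p (\<Sum>m=1..n1. A m * r h1 m (n1 + j))"
      by (intro pz_sum pz_multr zA R2) (use j in auto)
    have p2: "pz p ((\<Sum>i=1..n2. A (n1 + i) * r h1 (n1 + i) (n1 + j)) - (\<Sum>i=1..n2. B i * r h2 i j))"
      unfolding sum_subtractf[symmetric]
    proof (rule pz_sum)
      fix i assume i: "i \<in> {1..n2}"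
      have e: "A (n1 + i) * r h1 (n1 + i) (n1 + j) - B i * r h2 i j =
            (A (n1 + i) - B i) * r h1 (n1 + i) (n1 + j) + B i * (r h1 (n1 + i) (n1 + j) - r h2 i j)"
        by (simp add: algebra_simps)
      have "pz p (A (n1 + i) - B i)" using PA[OF i] by (simp add: congp_iff)
      moreover have "pz p (r h1 (n1 + i) (n1 + j) - r h2 i j)" using R1[OF i j] by (simp add: congp_iff)
      moreover have "zp p (B i)" using zB i by auto
      ultimately show "pz p (A (n1 + i) * r h1 (n1 + i) (n1 + j) - B i * r h2 i j)"
        unfolding e by (intro pz_add pz_multl pz_multr L(2))
    qed
    have p3: "pz p (\<Sum>i=1..n3. B (n2 + i) * r h2 (n2 + i) j)"
      by (intro pz_sum pz_multl pB L(2))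
    have "A' (n1 + j) - B' j = (\<Sum>m=1..n1. A m * r h1 m (n1 + j)) +
        ((\<Sum>i=1..n2. A (n1 + i) * r h1 (n1 + i) (n1 + j)) - (\<Sum>i=1..n2. B i * r h2 i j)) -
        (\<Sum>i=1..n3. B (n2 + i) * r h2 (n2 + i) j)" unfolding a b by simp
    hence "pz p (A' (n1 + j) - B' j)" using p1 p2 p3 by (simp add: pz_add pz_diff)
    thus ?thesis using zA' zB' by (simp add: congp_iff)
  qed
  have C2: "congp p (B' (n2 + j)) 0" if j: "j \<in> {1..n3}" for j
  proof -
    have b: "B' (n2 + j) = (\<Sum>i=1..n2. B i * r h2 i (n2 + j)) + (\<Sum>i=1..n3. B (n2 + i) * r h2 (n2 + i) (n2 + j))"
      unfolding B'_def by (rule sum_split)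
    have p1: "pz p (\<Sum>i=1..n2. B i * r h2 i (n2 + j))"
      by (intro pz_sum pz_multr zB R3) (use j in auto)
    have p3: "pz p (\<Sum>i=1..n3. B (n2 + i) * r h2 (n2 + i) (n2 + j))"
      by (intro pz_sum pz_multl pB L(2))
    have "pz p (B' (n2 + j))" unfolding b using p1 p3 by (rule pz_add)
    thus ?thesis using zB' by (simp add: congp_iff)
  qed
  show ?thesis unfolding Pc_def
    using zA' zB' C1 C2 N1 N2 nc2
    unfolding A'_def B'_def h1_def h2_def n1_def n2_def n3_def by auto
qed

end

lemma rmodD:
  assumes "is_rmod p M add z act"
  shows "\<And>x r. x \<in> M \<Longrightarrow> r \<in> Lam p \<Longrightarrow> act x r \<in> M"
    "\<And>x r s. x \<in> M \<Longrightarrow> r \<in> Lam p \<Longrightarrow> s \<in> Lam p \<Longrightarrow> act x (gadd r s) = add (act x r) (act x s)"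
    "\<And>x r s. x \<in> M \<Longrightarrow> r \<in> Lam p \<Longrightarrow> s \<in> Lam p \<Longrightarrow> act x (gmult r s) = act (act x r) s"
  using assms unfolding is_rmod_def by blast+

lemma rhomD:
  assumes "is_rhom p M addM actM N addN actN f"
  shows "\<And>x. x \<in> M \<Longrightarrow> f x \<in> N"
    "\<And>x r. x \<in> M \<Longrightarrow> r \<in> Lam p \<Longrightarrow> f (actM x r) = actN (f x) r"
  using assms unfolding is_rhom_def by blast+

context PP begin

lemma P_mem: "1 \<le> c \<Longrightarrow> c \<le> p - 1 \<Longrightarrow> x \<in> Ptilde p c \<longleftrightarrow> (\<exists>A B. x = mk p c A B \<and> Pc p c A B)"
  using P_char by blast

lemma congp_add: "congp p a b \<Longrightarrow> congp p a' b' \<Longrightarrow> congp p (a + a') (b + b')"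
  unfolding congp_iff using zp_add pz_add[of p "a - b" "a' - b'"] by (simp add: algebra_simps)

lemma congp_neg: "congp p a b \<Longrightarrow> congp p (- a) (- b)"
  unfolding congp_iff using zp_uminus pz_uminus[of p "a - b"] by (simp add: algebra_simps)

lemma congp_add0: "congp p a 0 \<Longrightarrow> congp p a' 0 \<Longrightarrow> congp p (a + a') 0"
  using congp_add[of a 0 a' 0] by simp

lemma congp_neg0: "congp p a 0 \<Longrightarrow> congp p (- a) 0"
  using congp_neg[of a 0] by simp

lemma Pc_add: "Pc p c A B \<Longrightarrow> Pc p c A' B' \<Longrightarrow> Pc p c (\<lambda>j. A j + A' j) (\<lambda>j. B j + B' j)"
  unfolding Pc_def by (auto intro: zp_add congp_add congp_add0)

lemma Pc_neg: "Pc p c A B \<Longrightarrow> Pc p c (\<lambda>j. - A j) (\<lambda>j. - B j)"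
  unfolding Pc_def by (auto intro: zp_uminus congp_neg congp_neg0)

lemma Pc_zero: "Pc p c (\<lambda>_. 0) (\<lambda>_. 0)" unfolding Pc_def by simp

lemma etilde_mk: assumes c: "1 \<le> c" "c \<le> p - 1"
  shows "gmult (etilde p c) (mk p c A B) = mk p c A B"
proof -
  have "gmult (etilde p c) (mk p c A B) = mk p c (mk p c A B (hook p c) (nc p c + 1)) (mk p c A B (hook p (c+1)) 1)"
    by (rule etilde_mult[OF c]) (use mk_nz in blast)
  also have "\<dots> = mk p c A B"
  proof (rule mk_cong)
    fix j assume "1 \<le> j" "j \<le> nlam (hook p c)"
    thus "mk p c A B (hook p c) (nc p c + 1) j = A j" by (rule mk_A)
  next
    fix j assume "1 \<le> j" "j \<le> nlam (hook p (c+1))"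
    thus "mk p c A B (hook p (c+1)) 1 j = B j" by (rule mk_B[OF c])
  qed
  finally show ?thesis .
qed

lemma etilde_eq: assumes c: "1 \<le> c" "c \<le> p - 1"
  shows "etilde p c = mk p c (\<lambda>j. if j = nc p c + 1 then 1 else 0) (\<lambda>j. if j = 1 then 1 else 0)"
    and "Pc p c (\<lambda>j. if j = nc p c + 1 then 1 else 0) (\<lambda>j. if j = 1 then 1 else 0)"
proof -
  note N = Nc[OF c]
  show "etilde p c = mk p c (\<lambda>j. if j = nc p c + 1 then 1 else 0) (\<lambda>j. if j = 1 then 1 else 0)"
    unfolding etilde_def mk_def eta_def gadd_def using N by (intro ext) auto
  have "nc p (c+1) \<ge> 1" using N by simp
  thus "Pc p c (\<lambda>j. if j = nc p c + 1 then 1 else 0) (\<lambda>j. if j = 1 then 1 else 0)"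
    unfolding Pc_def by (auto intro: congp_refl)
qed

lemma P_props: assumes c: "1 \<le> c" "c \<le> p - 1"
  shows "\<And>x. x \<in> Ptilde p c \<Longrightarrow> x \<in> Lam p"
    "\<And>x y. x \<in> Ptilde p c \<Longrightarrow> y \<in> Ptilde p c \<Longrightarrow> gadd x y \<in> Ptilde p c"
    "gzero \<in> Ptilde p c"
    "\<And>x. x \<in> Ptilde p c \<Longrightarrow> \<exists>y \<in> Ptilde p c. gadd x y = gzero"
    "\<And>x r. x \<in> Ptilde p c \<Longrightarrow> r \<in> Lam p \<Longrightarrow> gmult x r \<in> Ptilde p c"
    "\<And>x. x \<in> Ptilde p c \<Longrightarrow> gmult x (gone p) = x"
    "\<And>x. x \<in> Ptilde p c \<Longrightarrow> gmult (etilde p c) x = x"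
    "etilde p c \<in> Ptilde p c"
proof -
  note PM = P_mem[OF c]
  note N = Nc[OF c]
  show "\<And>x. x \<in> Ptilde p c \<Longrightarrow> x \<in> Lam p"
  proof -
    fix x assume "x \<in> Ptilde p c"
    then obtain A B where "x = mk p c A B" "Pc p c A B" using PM by blast
    thus "x \<in> Lam p" using mk_in_Lam[OF c] by simp
  qed
  show "\<And>x y. x \<in> Ptilde p c \<Longrightarrow> y \<in> Ptilde p c \<Longrightarrow> gadd x y \<in> Ptilde p c"
  proof -
    fix x y assume "x \<in> Ptilde p c" "y \<in> Ptilde p c"
    then obtain A B A' B' where "x = mk p c A B" "Pc p c A B" "y = mk p c A' B'" "Pc p c A' B'" using PM by blast
    thus "gadd x y \<in> Ptilde p c" using PM mk_add Pc_add by metis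
  qed
  show "gzero \<in> Ptilde p c" using PM mk_zero Pc_zero by metis
  show "\<And>x. x \<in> Ptilde p c \<Longrightarrow> \<exists>y \<in> Ptilde p c. gadd x y = gzero"
  proof -
    fix x assume "x \<in> Ptilde p c"
    then obtain A B where x: "x = mk p c A B" "Pc p c A B" using PM by blast
    have "gadd x (mk p c (\<lambda>j. - A j) (\<lambda>j. - B j)) = gzero" unfolding x mk_add using mk_zero by simp
    moreover have "mk p c (\<lambda>j. - A j) (\<lambda>j. - B j) \<in> Ptilde p c" using PM Pc_neg[OF x(2)] by blast
    ultimately show "\<exists>y \<in> Ptilde p c. gadd x y = gzero" by blast
  qed
  show "\<And>x r. x \<in> Ptilde p c \<Longrightarrow> r \<in> Lam p \<Longrightarrow> gmult x r \<in> Ptilde p c"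
  proof -
    fix x r assume "x \<in> Ptilde p c" "r \<in> Lam p"
    then obtain A B where x: "x = mk p c A B" "Pc p c A B" using PM by blast
    show "gmult x r \<in> Ptilde p c" unfolding x(1) mk_mult[OF c \<open>r \<in> Lam p\<close>]
      using PM mk_mult_Pc[OF c \<open>r \<in> Lam p\<close> x(2)] by blast
  qed
  show "\<And>x. x \<in> Ptilde p c \<Longrightarrow> gmult x (gone p) = x"
  proof -
    fix x assume "x \<in> Ptilde p c"
    then obtain A B where x: "x = mk p c A B" using PM by blast
    show "gmult x (gone p) = x" unfolding x
    proof (rule gmult_gone)
      fix lam i j assume "mk p c A B lam i j \<noteq> 0"
      from mk_nz[OF this] show "lam \<in> partitions p \<and> 1 \<le> j \<and> j \<le> nlam lam"
        using hook_part[of c p] hook_part[of "c+1" p] c by auto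
    qed
  qed
  show "\<And>x. x \<in> Ptilde p c \<Longrightarrow> gmult (etilde p c) x = x"
  proof -
    fix x assume "x \<in> Ptilde p c"
    then obtain A B where "x = mk p c A B" using PM by blast
    thus "gmult (etilde p c) x = x" using etilde_mk[OF c] by simp
  qed
  show "etilde p c \<in> Ptilde p c" using PM etilde_eq[OF c] by blast
qed

lemma rmod_P: assumes c: "1 \<le> c" "c \<le> p - 1"
  shows "is_rmod p (Ptilde p c) gadd gzero gmult"
  unfolding is_rmod_def
proof (intro conjI ballI)
  note PP = P_props[OF c]
  show "gzero \<in> Ptilde p c" by (rule PP(3))
  show "\<And>x y. x \<in> Ptilde p c \<Longrightarrow> y \<in> Ptilde p c \<Longrightarrow> gadd x y \<in> Ptilde p c" by (rule PP(2))
  show "\<And>x y w. gadd (gadd x y) w = gadd x (gadd y w)" by (rule gadd_assoc)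
  show "\<And>x y. gadd x y = gadd y x" by (rule gadd_comm)
  show "\<And>x. gadd gzero x = x" by (rule gadd_zero)
  show "\<And>x. x \<in> Ptilde p c \<Longrightarrow> \<exists>y \<in> Ptilde p c. gadd x y = gzero" by (rule PP(4))
  show "\<And>x r. x \<in> Ptilde p c \<Longrightarrow> r \<in> Lam p \<Longrightarrow> gmult x r \<in> Ptilde p c" by (rule PP(5))
  show "\<And>x r s. gmult x (gadd r s) = gadd (gmult x r) (gmult x s)" by (rule gmult_gadd_right)
  show "\<And>x y r. gmult (gadd x y) r = gadd (gmult x r) (gmult y r)" by (rule gmult_gadd_left)
  show "\<And>x r s. gmult x (gmult r s) = gmult (gmult x r) s" by (rule gmult_assoc[symmetric])
  show "\<And>x. x \<in> Ptilde p c \<Longrightarrow> gmult x (gone p) = x" by (rule PP(6))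
qed

lemma proj_P: assumes c: "1 \<le> c" "c \<le> p - 1"
  shows "projective_rmod TYPE('m) p (Ptilde p c) gadd gzero gmult"
  unfolding projective_rmod_def
proof (intro conjI allI impI)
  note PP = P_props[OF c]
  show "is_rmod p (Ptilde p c) gadd gzero gmult" by (rule rmod_P[OF c])
  fix A :: "'m set" and addA zA actA and B :: "'m set" and addB zB actB g f
  assume rA: "is_rmod p A addA zA actA" and rB: "is_rmod p B addB zB actB"
    and g: "is_rhom p A addA actA B addB actB g" and gs: "g ` A = B"
    and f: "is_rhom p (Ptilde p c) gadd gmult B addB actB f"
  have "f (etilde p c) \<in> B" using rhomD(1)[OF f PP(8)] .
  hence "f (etilde p c) \<in> g ` A" using gs by simp
  then obtain a where a: "a \<in> A" "g a = f (etilde p c)" by (metis imageE)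
  have h: "is_rhom p (Ptilde p c) gadd gmult A addA actA (\<lambda>x. actA a x)"
    unfolding is_rhom_def
  proof (intro conjI ballI)
    fix x assume x: "x \<in> Ptilde p c"
    show "actA a x \<in> A" using rmodD(1)[OF rA a(1) PP(1)[OF x]] .
    fix y assume y: "y \<in> Ptilde p c"
    show "actA a (gadd x y) = addA (actA a x) (actA a y)" using rmodD(2)[OF rA a(1) PP(1)[OF x] PP(1)[OF y]] .
  next
    fix x r assume x: "x \<in> Ptilde p c" and r: "r \<in> Lam p"
    show "actA a (gmult x r) = actA (actA a x) r" using rmodD(3)[OF rA a(1) PP(1)[OF x] r] .
  qed
  have "\<forall>x \<in> Ptilde p c. g (actA a x) = f x"
  proof
    fix x assume x: "x \<in> Ptilde p c"
    have "g (actA a x) = actB (g a) x" using rhomD(2)[OF g a(1) PP(1)[OF x]] .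
    also have "\<dots> = actB (f (etilde p c)) x" using a(2) by simp
    also have "\<dots> = f (gmult (etilde p c) x)" using rhomD(2)[OF f PP(8) PP(1)[OF x]] by simp
    also have "\<dots> = f x" using PP(7)[OF x] by simp
    finally show "g (actA a x) = f x" .
  qed
  thus "\<exists>h. is_rhom p (Ptilde p c) gadd gmult A addA actA h \<and> (\<forall>x\<in>Ptilde p c. g (h x) = f x)"
    using h by blast
qed

end

lemma hom_left: "(\<And>x. x \<in> M \<Longrightarrow> gmult d x \<in> N) \<Longrightarrow> is_rhom p M gadd gmult N gadd gmult (gmult d)"
  unfolding is_rhom_def by (simp add: gmult_gadd_right gmult_assoc)

context PP begin

lemma pfacts: "p - 1 + 1 = p" "Suc (p - 1) = p" "p - 2 + 1 = p - 1" "Suc (p - 2) = p - 1" "p - 1 \<noteq> 1" "1 \<le> p - 2"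
  using p3 by auto

lemma ehat_E1: "1 \<le> k \<Longrightarrow> k \<le> p - 2 \<Longrightarrow> ehat p (k+1) k = eta (hook p (k+1)) (nc p (k+1) + 1) 1"
  unfolding ehat_def using p3 by auto
lemma ehat_E2: "1 \<le> k \<Longrightarrow> k \<le> p - 2 \<Longrightarrow> ehat p k (k+1) = gsmul (of_nat p) (eta (hook p (k+1)) 1 (nc p (k+1) + 1))"
  unfolding ehat_def using p3 by auto
lemma ehat_E3: "ehat p 1 1 = gsmul (of_nat p) (eta (hook p 1) 1 1)"
  unfolding ehat_def by simp
lemma ehat_E4: "ehat p (p-1) (p-1) = gsmul (of_nat p) (eta (hook p p) 1 1)"
  unfolding ehat_def using p3 by auto

lemma E1: assumes k: "1 \<le> k" "k \<le> p - 2"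
  shows "gmult (ehat p (k+1) k) (mk p k A B) = mk p (k+1) B (\<lambda>_. 0)"
proof -
  have c: "1 \<le> k" "k \<le> p - 1" using k by auto
  have c': "1 \<le> k+1" "k+1 \<le> p - 1" using k by auto
  note N = Nc[OF c] and N' = Nc[OF c']
  show ?thesis unfolding ehat_E1[OF k] gmult_eta
    unfolding mk_def using N N' by (intro ext) auto
qed

lemma E2: assumes k: "1 \<le> k" "k \<le> p - 2"
  shows "gmult (ehat p k (k+1)) (mk p (k+1) A B) = mk p k (\<lambda>_. 0) (\<lambda>j. of_nat p * A j)"
proof -
  have c: "1 \<le> k" "k \<le> p - 1" using k by auto
  have c': "1 \<le> k+1" "k+1 \<le> p - 1" using k by auto
  note N = Nc[OF c] and N' = Nc[OF c']
  show ?thesis unfolding ehat_E2[OF k] gmult_gsmul unfolding gmult_eta gsmul_def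
    unfolding mk_def using N N' by (intro ext) auto
qed

lemma E3: "gmult (ehat p 1 1) (mk p 1 A B) = mk p 1 (\<lambda>j. of_nat p * A j) (\<lambda>_. 0)"
proof -
  have c: "1 \<le> (1::nat)" "1 \<le> p - 1" using p3 by auto
  note N = Nc[OF c]
  show ?thesis unfolding ehat_E3 gmult_gsmul unfolding gmult_eta gsmul_def
    unfolding mk_def using N nc_1[of p] by (intro ext) auto
qed

lemma E4: "gmult (ehat p (p-1) (p-1)) (mk p (p-1) A B) = mk p (p-1) (\<lambda>_. 0) (\<lambda>j. of_nat p * B j)"
proof -
  have c: "1 \<le> p - 1" "p - 1 \<le> p - 1" using p3 by auto
  note N = Nc[OF c]
  have hp: "hook p (p - 1 + 1) = hook p p" using pfacts by simp
  have np: "nlam (hook p p) = 1" using nlam_hook[of p p] nb_p[of p] nc_p[of p] p3 by simp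
  show ?thesis unfolding ehat_E4 gmult_gsmul unfolding gmult_eta gsmul_def
    unfolding mk_def hp using N hp np by (intro ext) auto
qed

end

context PP begin

lemma congp_p0: "zp p a \<Longrightarrow> congp p (of_nat p * a) 0"
  unfolding congp_iff using p3 by (simp add: zp_mult pz_p)
lemma congp_0p: "zp p a \<Longrightarrow> congp p 0 (of_nat p * a)"
  unfolding congp_iff using p3 pz_uminus[OF pz_p[of p a]] by (simp add: zp_mult)

lemma Nfacts: "nlam (hook p 1) = 1" "nlam (hook p p) = 1" "nc p 1 = 0" "nb p 1 = 1" "nb p p = 0"
  "nb p (p-1) = 1" "nc p p = 1" "nc p 2 = 1"
proof -
  show "nc p 1 = 0" by (rule nc_1)
  show "nb p 1 = 1" by (rule nb_1)
  show "nb p p = 0" using nb_p p3 by simp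
  show "nb p (p-1) = 1" using nb_pm1 p3 by simp
  show "nc p p = 1" using nc_p p3 by simp
  show "nc p 2 = 1" unfolding nc_def by simp
  show "nlam (hook p 1) = 1" using nlam_hook[of 1 p] p3 nc_1 nb_1 by simp
  show "nlam (hook p p) = 1" using nlam_hook[of p p] p3 nc_p nb_p by simp
qed

lemma into_E1: assumes k: "1 \<le> k" "k \<le> p - 2" and P: "Pc p k A B"
  shows "Pc p (k+1) B (\<lambda>_. 0)"
proof -
  have c: "1 \<le> k" "k \<le> p - 1" using k by auto
  note N = Nc[OF c]
  show ?thesis using P N unfolding Pc_def by auto
qed

lemma into_E2: assumes k: "1 \<le> k" "k \<le> p - 2" and P: "Pc p (k+1) A B"
  shows "Pc p k (\<lambda>_. 0) (\<lambda>j. of_nat p * A j)"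
proof -
  have c: "1 \<le> k" "k \<le> p - 1" using k by auto
  have c': "1 \<le> k+1" "k+1 \<le> p - 1" using k by auto
  note N = Nc[OF c] and N' = Nc[OF c']
  have zA: "\<And>j. 1 \<le> j \<Longrightarrow> j \<le> nlam (hook p (k+1)) \<Longrightarrow> zp p (A j)" using P unfolding Pc_def by auto
  show ?thesis unfolding Pc_def
  proof (intro conjI ballI)
    fix j assume "j \<in> {1..nlam (hook p (k+1))}"
    thus "zp p (of_nat p * A j)" using zA by (auto intro: zp_mult)
  next
    fix j assume "j \<in> {1..nb p k}"
    thus "congp p 0 (of_nat p * A j)" using zA N N' by (intro congp_0p) auto
  next
    fix j assume "j \<in> {1..nb p (k+1)}"
    thus "congp p (of_nat p * A (nc p (k+1) + j)) 0" using zA N' by (intro congp_p0) auto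
  qed simp
qed

lemma into_E3: assumes P: "Pc p 1 A B" shows "Pc p 1 (\<lambda>j. of_nat p * A j) (\<lambda>_. 0)"
proof -
  have zA: "\<And>j. 1 \<le> j \<Longrightarrow> j \<le> nlam (hook p 1) \<Longrightarrow> zp p (A j)" using P unfolding Pc_def by auto
  show ?thesis unfolding Pc_def
  proof (intro conjI ballI)
    fix j assume "j \<in> {1..nlam (hook p 1)}"
    thus "zp p (of_nat p * A j)" using zA by (auto intro: zp_mult)
  next
    fix j assume "j \<in> {1..nb p 1}"
    thus "congp p (of_nat p * A (nc p 1 + j)) 0" using zA Nfacts by (intro congp_p0) auto
  qed simp_all
qed

lemma into_E4: assumes P: "Pc p (p-1) A B" shows "Pc p (p-1) (\<lambda>_. 0) (\<lambda>j. of_nat p * B j)"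
proof -
  have zB: "\<And>j. 1 \<le> j \<Longrightarrow> j \<le> nlam (hook p p) \<Longrightarrow> zp p (B j)" using P pfacts unfolding Pc_def by auto
  show ?thesis unfolding Pc_def pfacts
  proof (intro conjI ballI)
    fix j assume "j \<in> {1..nlam (hook p p)}"
    thus "zp p (of_nat p * B j)" using zB by (auto intro: zp_mult)
  next
    fix j assume "j \<in> {1..nb p (p-1)}"
    thus "congp p 0 (of_nat p * B j)" using zB Nfacts by (intro congp_0p) auto
  next
    fix j assume "j \<in> {1..nb p p}"
    thus "congp p (of_nat p * B (nc p p + j)) 0" using Nfacts by simp
  qed simp
qed

end

context PP begin

lemma pz_divp: "pz p x \<Longrightarrow> zp p (x / of_nat p)" unfolding pz_def .
lemma mult_divp: "of_nat p * (x / of_nat p) = (x::rat)" using p3 by simp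

lemma K1a: assumes c: "1 \<le> c" "c \<le> p - 2" and P: "Pc p c A B"
  and A0: "\<And>j. 1 \<le> j \<Longrightarrow> j \<le> nlam (hook p c) \<Longrightarrow> A j = 0"
  shows "mk p c A B \<in> gmult (ehat p c (c+1)) ` Ptilde p (c+1)"
proof -
  have c1: "1 \<le> c" "c \<le> p - 1" using c by auto
  have c2: "1 \<le> c+1" "c+1 \<le> p - 1" using c by auto
  note N = Nc[OF c1] and N' = Nc[OF c2]
  have Bp: "pz p (B j)" if j: "1 \<le> j" "j \<le> nlam (hook p (c+1))" for j
  proof (cases "j \<le> nb p c")
    case True
    have "congp p (A (nc p c + j)) (B j)" using P True j unfolding Pc_def by auto
    moreover have "A (nc p c + j) = 0" using A0[of "nc p c + j"] True j N by auto
    ultimately show ?thesis by (simp add: congp_iff pz_uminus[of p "- B j", simplified])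
  next
    case False
    have "j - nb p c \<in> {1..nb p (c+1)}" using False j N by auto
    hence "congp p (B (nc p (c+1) + (j - nb p c))) 0" using P unfolding Pc_def by blast
    moreover have "nc p (c+1) + (j - nb p c) = j" using False N by simp
    ultimately show ?thesis by (simp add: congp_iff)
  qed
  define B1 where "B1 = (\<lambda>j. B j / of_nat p)"
  define B2 where "B2 = (\<lambda>j. if j \<le> nb p (c+1) then B1 (nc p (c+1) + j) else 0)"
  have zB1: "zp p (B1 j)" if "1 \<le> j" "j \<le> nlam (hook p (c+1))" for j
    unfolding B1_def using Bp[OF that] by (rule pz_divp)
  have "Pc p (c+1) B1 B2" unfolding Pc_def
  proof (intro conjI ballI)
    fix j assume "j \<in> {1..nlam (hook p (c+1))}" thus "zp p (B1 j)" using zB1 by auto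
  next
    fix j assume "j \<in> {1..nlam (hook p (c+1+1))}" thus "zp p (B2 j)" unfolding B2_def using zB1 N' by auto
  next
    fix j assume j: "j \<in> {1..nb p (c+1)}"
    have "B2 j = B1 (nc p (c+1) + j)" using j unfolding B2_def by auto
    moreover have "zp p (B1 (nc p (c+1) + j))" using zB1 j N' by auto
    ultimately show "congp p (B1 (nc p (c+1) + j)) (B2 j)" by (simp add: congp_refl)
  next
    fix j assume j: "j \<in> {1..nb p (c+1+1)}"
    have "nc p (c+1+1) = nb p (c+1)" using nc_Suc[of "c+1" p] by simp
    hence "B2 (nc p (c+1+1) + j) = 0" using j unfolding B2_def by auto
    thus "congp p (B2 (nc p (c+1+1) + j)) 0" by simp
  qed
  hence y: "mk p (c+1) B1 B2 \<in> Ptilde p (c+1)" using P_mem[OF c2] by blast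
  have "gmult (ehat p c (c+1)) (mk p (c+1) B1 B2) = mk p c (\<lambda>_. 0) (\<lambda>j. of_nat p * B1 j)" by (rule E2[OF c])
  also have "\<dots> = mk p c A B" by (rule mk_cong) (use p3 in \<open>simp_all add: A0 B1_def\<close>)
  finally show ?thesis using y by (metis image_eqI)
qed

lemma K1b: assumes P: "Pc p (p-1) A B"
  and A0: "\<And>j. 1 \<le> j \<Longrightarrow> j \<le> nlam (hook p (p-1)) \<Longrightarrow> A j = 0"
  shows "mk p (p-1) A B \<in> gmult (ehat p (p-1) (p-1)) ` Ptilde p (p-1)"
proof -
  have c1: "1 \<le> p - 1" "p - 1 \<le> p - 1" using p3 by auto
  note N = Nc[OF c1]
  have "congp p (A (nc p (p-1) + 1)) (B 1)" using P Nfacts unfolding Pc_def by auto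
  moreover have "A (nc p (p-1) + 1) = 0" using A0 N Nfacts by simp
  ultimately have Bp: "pz p (B 1)" by (simp add: congp_iff pz_uminus[of p "- B 1", simplified])
  define b where "b = B 1 / of_nat p"
  have zb: "zp p b" unfolding b_def using Bp by (rule pz_divp)
  define A1 where "A1 = (\<lambda>j. if j = nc p (p-1) + 1 then b else 0)"
  define B1 where "B1 = (\<lambda>j::nat. if j = 1 then b else 0)"
  have "Pc p (p-1) A1 B1" unfolding Pc_def pfacts using zb Nfacts unfolding A1_def B1_def
    by (auto intro: congp_refl)
  hence y: "mk p (p-1) A1 B1 \<in> Ptilde p (p-1)" using P_mem[OF c1] by blast
  have "gmult (ehat p (p-1) (p-1)) (mk p (p-1) A1 B1) = mk p (p-1) (\<lambda>_. 0) (\<lambda>j. of_nat p * B1 j)" by (rule E4)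
  also have "\<dots> = mk p (p-1) A B"
  proof (rule mk_cong)
    fix j assume "1 \<le> j" "j \<le> nlam (hook p (p - 1 + 1))"
    hence "j = 1" using Nfacts pfacts by simp
    thus "of_nat p * B1 j = B j" unfolding B1_def b_def using mult_divp by simp
  qed (simp add: A0)
  finally show ?thesis using y by (metis image_eqI)
qed

lemma K2a: assumes c: "2 \<le> c" "c \<le> p - 1" and P: "Pc p c A B"
  and B0: "\<And>j. 1 \<le> j \<Longrightarrow> j \<le> nlam (hook p (c+1)) \<Longrightarrow> B j = 0"
  shows "mk p c A B \<in> gmult (ehat p c (c-1)) ` Ptilde p (c-1)"
proof -
  define k where "k = c - 1"
  have k: "1 \<le> k" "k \<le> p - 2" and ck: "c = k + 1" unfolding k_def using c by auto
  have c1: "1 \<le> k" "k \<le> p - 1" using k by auto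
  have c2: "1 \<le> c" "c \<le> p - 1" using c by auto
  note N = Nc[OF c1] and N' = Nc[OF c2]
  have zA: "zp p (A j)" if "1 \<le> j" "j \<le> nlam (hook p c)" for j using P that unfolding Pc_def by auto
  define A1 where "A1 = (\<lambda>j. if nc p k < j \<and> j \<le> nc p k + nb p k then A (j - nc p k) else 0)"
  have ncc: "nc p c = nb p k" using N ck by simp
  have "Pc p k A1 A" unfolding Pc_def
  proof (intro conjI ballI)
    fix j assume "j \<in> {1..nlam (hook p k)}" thus "zp p (A1 j)" unfolding A1_def using zA N' ncc by auto
  next
    fix j assume "j \<in> {1..nlam (hook p (k+1))}" thus "zp p (A j)" using zA ck by auto
  next
    fix j assume j: "j \<in> {1..nb p k}"
    have "A1 (nc p k + j) = A j" using j unfolding A1_def by auto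
    moreover have "zp p (A j)" using zA j N' ncc by auto
    ultimately show "congp p (A1 (nc p k + j)) (A j)" by (simp add: congp_refl)
  next
    fix j assume j: "j \<in> {1..nb p (k+1)}"
    have "congp p (A (nc p c + j)) (B j)" using P j ck unfolding Pc_def by auto
    moreover have "B j = 0" using B0 j N' ck by auto
    ultimately show "congp p (A (nc p (k+1) + j)) 0" using ck by simp
  qed
  hence y: "mk p k A1 A \<in> Ptilde p k" using P_mem[OF c1] by blast
  have "gmult (ehat p (k+1) k) (mk p k A1 A) = mk p (k+1) A (\<lambda>_. 0)" by (rule E1[OF k])
  also have "\<dots> = mk p c A B" unfolding ck by (rule mk_cong) (simp_all add: B0[unfolded ck])
  finally show ?thesis using y ck by (metis image_eqI diff_add_inverse2)
qed

lemma K2b: assumes P: "Pc p 1 A B"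
  and B0: "\<And>j. 1 \<le> j \<Longrightarrow> j \<le> nlam (hook p 2) \<Longrightarrow> B j = 0"
  shows "mk p 1 A B \<in> gmult (ehat p 1 1) ` Ptilde p 1"
proof -
  have c1: "1 \<le> (1::nat)" "1 \<le> p - 1" using p3 by auto
  note N = Nc[OF c1]
  have "congp p (A (nc p 1 + 1)) (B 1)" using P Nfacts unfolding Pc_def by auto
  moreover have "nlam (hook p 2) \<ge> 1" using N by (simp add: numeral_2_eq_2)
  hence "B 1 = 0" using B0[of 1] by simp
  ultimately have Ap: "pz p (A 1)" using Nfacts by (simp add: congp_iff)
  define a where "a = A 1 / of_nat p"
  have za: "zp p a" unfolding a_def using Ap by (rule pz_divp)
  define A1 where "A1 = (\<lambda>j::nat. if j = 1 then a else 0)"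
  have "Pc p 1 A1 A1" unfolding Pc_def using za Nfacts Nfacts(8)[unfolded numeral_2_eq_2] unfolding A1_def
    by (auto intro: congp_refl)
  hence y: "mk p 1 A1 A1 \<in> Ptilde p 1" using P_mem[OF c1] by blast
  have "gmult (ehat p 1 1) (mk p 1 A1 A1) = mk p 1 (\<lambda>j. of_nat p * A1 j) (\<lambda>_. 0)" by (rule E3)
  also have "\<dots> = mk p 1 A B"
  proof (rule mk_cong)
    fix j assume "1 \<le> j" "j \<le> nlam (hook p 1)"
    hence "j = 1" using Nfacts by simp
    thus "of_nat p * A1 j = A j" unfolding A1_def a_def using mult_divp by simp
  qed (use B0[unfolded numeral_2_eq_2] in simp)
  finally show ?thesis using y by (metis image_eqI)
qed

end

context PP begin

lemma omega_triple: assumes i: "i \<ge> 1"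
  shows "(omega p (i-1) = 1 \<and> omega p i = 1 \<and> omega p (i+1) = 2) \<or>
         (\<exists>c. 2 \<le> c \<and> c \<le> p-2 \<and> omega p (i-1) = c-1 \<and> omega p i = c \<and> omega p (i+1) = c+1) \<or>
         (omega p (i-1) = p-2 \<and> omega p i = p-1 \<and> omega p (i+1) = p-1) \<or>
         (omega p (i-1) = p-1 \<and> omega p i = p-1 \<and> omega p (i+1) = p-2) \<or>
         (\<exists>c. 2 \<le> c \<and> c \<le> p-2 \<and> omega p (i-1) = c+1 \<and> omega p i = c \<and> omega p (i+1) = c-1) \<or>
         (omega p (i-1) = 2 \<and> omega p i = 1 \<and> omega p (i+1) = 1)"
proof -
  define l where "l = 2 * (p - 1)"
  define r where "r = i mod l"
  have lpos: "l > 0" unfolding l_def using p3 by simp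
  have rl: "r < l" unfolding r_def using lpos by simp
  have om: "\<And>m. omega p m = (if m mod l \<le> p - 2 then m mod l + 1 else l - m mod l)"
    unfolding omega_def l_def Let_def by simp
  have ri: "r = (if Suc ((i-1) mod l) = l then 0 else Suc ((i-1) mod l))"
    unfolding r_def using mod_Suc[of "i-1" l] i by simp
  have "(i-1) mod l < l" using lpos by simp
  hence rm1: "(i-1) mod l = (if r = 0 then l - 1 else r - 1)" using ri by (auto split: if_splits)
  have rp1: "(i+1) mod l = (if Suc r = l then 0 else Suc r)" unfolding r_def using mod_Suc[of i l] by simp
  define f where "f = (\<lambda>m. if m \<le> p - 2 then m + 1 else l - m)"
  have O: "omega p (i-1) = f (if r = 0 then l - 1 else r - 1)" "omega p i = f r" "omega p (i+1) = f (if Suc r = l then 0 else Suc r)"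
    unfolding f_def using om[of "i-1"] om[of i] om[of "i+1"] rm1 rp1 r_def by simp_all
  have L: "l = 2 * p - 2" unfolding l_def by simp
  have f1: "m \<le> p - 2 \<Longrightarrow> f m = m + 1" for m unfolding f_def by simp
  have f2: "\<not> m \<le> p - 2 \<Longrightarrow> f m = l - m" for m unfolding f_def by simp
  have f1': "m \<le> p - 2 \<Longrightarrow> m + 1 = v \<Longrightarrow> f m = v" for m v using f1 by simp
  have f2': "\<not> m \<le> p - 2 \<Longrightarrow> l - m = v \<Longrightarrow> f m = v" for m v using f2 by simp
  consider "r = 0" | "1 \<le> r \<and> r \<le> p - 3" | "r = p - 2" | "r = p - 1" | "p \<le> r \<and> r \<le> l - 2" | "r = l - 1"
    using rl p3 L by arith
  thus ?thesis
  proof cases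
    case 1
    have "omega p (i-1) = 1" using O(1) 1 f2[of "l-1"] p3 L by simp
    moreover have "omega p i = 1" using O(2) 1 f1[of 0] by simp
    moreover have "Suc r \<noteq> l" "1 \<le> p - 2" using 1 L p3 by arith+
    hence "omega p (i+1) = 2" using O(3) 1 f1[of 1] by simp
    ultimately show ?thesis by blast
  next
    case 2
    have "Suc r \<noteq> l" "r - 1 \<le> p - 2" "r \<le> p - 2" "Suc r \<le> p - 2" "r \<noteq> 0" using 2 L p3 by arith+
    hence "omega p (i-1) = (r+1)-1 \<and> omega p i = r+1 \<and> omega p (i+1) = (r+1)+1"
      using O 2 f1[of "r-1"] f1[of r] f1[of "Suc r"] p3 by simp
    moreover have "2 \<le> r + 1 \<and> r + 1 \<le> p - 2" using 2 by arith
    ultimately show ?thesis by blast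
  next
    case 3
    have "Suc r \<noteq> l" "r \<noteq> 0" using 3 L p3 by arith+
    moreover have "f (r - 1) = p - 2" by (rule f1') (use 3 p3 in arith)+
    moreover have "f r = p - 1" by (rule f1') (use 3 p3 in arith)+
    moreover have "f (Suc r) = p - 1" by (rule f2') (use 3 p3 L in arith)+
    ultimately show ?thesis using O by simp
  next
    case 4
    have "Suc r \<noteq> l" "r \<noteq> 0" using 4 L p3 by arith+
    moreover have "f (r - 1) = p - 1" by (rule f1') (use 4 p3 in arith)+
    moreover have "f r = p - 1" by (rule f2') (use 4 p3 L in arith)+
    moreover have "f (Suc r) = p - 2" by (rule f2') (use 4 p3 L in arith)+
    ultimately show ?thesis using O by simp
  next
    case 5
    have "Suc r \<noteq> l" "r \<noteq> 0" using 5 L p3 by arith+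
    moreover have "f (r - 1) = (l - r) + 1" by (rule f2') (use 5 p3 L in arith)+
    moreover have "f r = l - r" by (rule f2') (use 5 p3 L in arith)+
    moreover have "f (Suc r) = (l - r) - 1" by (rule f2') (use 5 p3 L in arith)+
    moreover have "2 \<le> l - r \<and> l - r \<le> p - 2" using 5 p3 L by arith
    ultimately show ?thesis using O by (metis add_diff_cancel_right')
  next
    case 6
    have "r \<noteq> 0" "Suc r = l" using 6 L p3 by arith+
    moreover have "f (r - 1) = 2" by (rule f2') (use 6 p3 L in arith)+
    moreover have "f r = 1" by (rule f2') (use 6 p3 L in arith)+
    moreover have "f 0 = 1" by (rule f1') (use p3 in arith)+
    ultimately show ?thesis using O by simp
  qed
qed

lemma omega01: "omega p 0 = 1" "omega p 1 = 2"
  unfolding omega_def Let_def using p3 by auto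

end

lemma exact_pat: "(\<And>y. y \<in> Q \<Longrightarrow> f y \<in> M) \<Longrightarrow> (\<And>y. y \<in> Q \<Longrightarrow> g (f y) = z) \<Longrightarrow>
   (\<And>x. x \<in> M \<Longrightarrow> g x = z \<Longrightarrow> x \<in> f ` Q) \<Longrightarrow> {x\<in>M. g x = z} = f ` Q"
  by blast

context PP begin

lemma hom_E1: assumes k: "1 \<le> k" "k \<le> p - 2" and x: "x \<in> Ptilde p k"
  shows "gmult (ehat p (k+1) k) x \<in> Ptilde p (k+1)"
proof -
  have c: "1 \<le> k" "k \<le> p - 1" and c': "1 \<le> k+1" "k+1 \<le> p - 1" using k by auto
  obtain A B where xe: "x = mk p k A B" and P: "Pc p k A B" using x P_mem[OF c] by blast
  have "Pc p (k+1) B (\<lambda>_. 0)" by (rule into_E1[OF k P])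
  thus ?thesis unfolding xe E1[OF k] P_mem[OF c'] by blast
qed

lemma hom_E2: assumes k: "1 \<le> k" "k \<le> p - 2" and x: "x \<in> Ptilde p (k+1)"
  shows "gmult (ehat p k (k+1)) x \<in> Ptilde p k"
proof -
  have c: "1 \<le> k" "k \<le> p - 1" and c': "1 \<le> k+1" "k+1 \<le> p - 1" using k by auto
  obtain A B where xe: "x = mk p (k+1) A B" and P: "Pc p (k+1) A B" using x P_mem[OF c'] by blast
  have "Pc p k (\<lambda>_. 0) (\<lambda>j. of_nat p * A j)" by (rule into_E2[OF k P])
  thus ?thesis unfolding xe E2[OF k] P_mem[OF c] by blast
qed

lemma hom_E3: assumes x: "x \<in> Ptilde p 1" shows "gmult (ehat p 1 1) x \<in> Ptilde p 1"
proof -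
  have c: "1 \<le> (1::nat)" "1 \<le> p - 1" using p3 by auto
  obtain A B where xe: "x = mk p 1 A B" and P: "Pc p 1 A B" using x P_mem[OF c] by blast
  have "Pc p 1 (\<lambda>j. of_nat p * A j) (\<lambda>_. 0)" by (rule into_E3[OF P])
  thus ?thesis unfolding xe E3 P_mem[OF c] by blast
qed

lemma hom_E4: assumes x: "x \<in> Ptilde p (p-1)" shows "gmult (ehat p (p-1) (p-1)) x \<in> Ptilde p (p-1)"
proof -
  have c: "1 \<le> p - 1" "p - 1 \<le> p - 1" using p3 by auto
  obtain A B where xe: "x = mk p (p-1) A B" and P: "Pc p (p-1) A B" using x P_mem[OF c] by blast
  have "Pc p (p-1) (\<lambda>_. 0) (\<lambda>j. of_nat p * B j)" by (rule into_E4[OF P])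
  thus ?thesis unfolding xe E4 P_mem[OF c] by blast
qed

lemma dhat_hom: assumes i: "i \<ge> 1"
  shows "is_rhom p (Ptilde p (omega p i)) gadd gmult (Ptilde p (omega p (i - 1))) gadd gmult (gmult (dhat p i))"
  unfolding dhat_def
proof (rule hom_left)
  fix x assume x: "x \<in> Ptilde p (omega p i)"
  from omega_triple[OF i]
  show "gmult (ehat p (omega p (i - 1)) (omega p i)) x \<in> Ptilde p (omega p (i - 1))"
  proof (elim disjE exE conjE)
    assume "omega p (i - 1) = 1" "omega p i = 1" thus ?thesis using x hom_E3 by simp
  next
    fix c assume h: "2 \<le> c" "c \<le> p - 2" "omega p (i - 1) = c - 1" "omega p i = c"
    have "c = (c-1) + 1" using h by simp
    thus ?thesis using x h hom_E2[of "c-1" x] by (metis diff_le_self le_diff_conv le_trans one_add_one add_le_cancel_right)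
  next
    assume h: "omega p (i - 1) = p - 2" "omega p i = p - 1"
    have "p - 1 = (p - 2) + 1" using p3 by simp
    thus ?thesis using x h hom_E2[of "p-2" x] p3 by simp
  next
    assume "omega p (i - 1) = p - 1" "omega p i = p - 1" thus ?thesis using x hom_E4 by simp
  next
    fix c assume h: "2 \<le> c" "c \<le> p - 2" "omega p (i - 1) = c + 1" "omega p i = c"
    thus ?thesis using x hom_E1[of c x] by simp
  next
    assume h: "omega p (i - 1) = 2" "omega p i = 1"
    thus ?thesis using x hom_E1[of 1 x] pfacts by (simp add: numeral_2_eq_2)
  qed
qed

end

context PP begin

lemma kA_E2: assumes c: "2 \<le> c" "c \<le> p - 1" and x: "x \<in> Ptilde p c" and z: "gmult (ehat p (c-1) c) x = gzero"
  shows "\<exists>A B. x = mk p c A B \<and> Pc p c A B \<and> (\<forall>j. 1 \<le> j \<and> j \<le> nlam (hook p c) \<longrightarrow> A j = 0)"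
proof -
  obtain k where ck: "c = k + 1" using c by (metis add.commute le_add_diff_inverse2 le_trans one_le_numeral)
  have k: "1 \<le> k" "k \<le> p - 2" and k1: "1 \<le> k" "k \<le> p - 1" using c ck by auto
  have c1: "1 \<le> c" "c \<le> p - 1" using c by auto
  obtain A B where xe: "x = mk p c A B" and P: "Pc p c A B" using x P_mem[OF c1] by blast
  have "mk p k (\<lambda>_. 0) (\<lambda>j. of_nat p * A j) = gzero" using z E2[OF k, of A B] unfolding xe ck by simp
  hence "\<And>j. 1 \<le> j \<Longrightarrow> j \<le> nlam (hook p (k+1)) \<Longrightarrow> of_nat p * A j = 0" by (rule mk_eq_zero(2)[OF k1])
  hence "\<forall>j. 1 \<le> j \<and> j \<le> nlam (hook p c) \<longrightarrow> A j = 0" using p3 ck by simp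
  thus ?thesis using xe P by blast
qed

lemma kA_E3: assumes x: "x \<in> Ptilde p 1" and z: "gmult (ehat p 1 1) x = gzero"
  shows "\<exists>A B. x = mk p 1 A B \<and> Pc p 1 A B \<and> (\<forall>j. 1 \<le> j \<and> j \<le> nlam (hook p 1) \<longrightarrow> A j = 0)"
proof -
  have c1: "1 \<le> (1::nat)" "1 \<le> p - 1" using p3 by auto
  obtain A B where xe: "x = mk p 1 A B" and P: "Pc p 1 A B" using x P_mem[OF c1] by blast
  have "mk p 1 (\<lambda>j. of_nat p * A j) (\<lambda>_. 0) = gzero" using z E3 unfolding xe by simp
  hence "\<And>j. 1 \<le> j \<Longrightarrow> j \<le> nlam (hook p 1) \<Longrightarrow> of_nat p * A j = 0" by (rule mk_eq_zero(1)[OF c1])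
  hence "\<forall>j. 1 \<le> j \<and> j \<le> nlam (hook p 1) \<longrightarrow> A j = 0" using p3 by simp
  thus ?thesis using xe P by blast
qed

lemma epshat_mk: "epshat p (mk p 1 A B) = A 1"
  unfolding epshat_def using mk_A[of 1 1 A B] Nfacts by simp

lemma kA_eps: assumes x: "x \<in> Ptilde p 1" and z: "epshat p x = 0"
  shows "\<exists>A B. x = mk p 1 A B \<and> Pc p 1 A B \<and> (\<forall>j. 1 \<le> j \<and> j \<le> nlam (hook p 1) \<longrightarrow> A j = 0)"
proof -
  have c1: "1 \<le> (1::nat)" "1 \<le> p - 1" using p3 by auto
  obtain A B where xe: "x = mk p 1 A B" and P: "Pc p 1 A B" using x P_mem[OF c1] by blast
  have "A 1 = 0" using z epshat_mk xe by simp
  hence "\<forall>j. 1 \<le> j \<and> j \<le> nlam (hook p 1) \<longrightarrow> A j = 0" using Nfacts by (metis le_antisym)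
  thus ?thesis using xe P by blast
qed

lemma kB_E1: assumes c: "1 \<le> c" "c \<le> p - 2" and x: "x \<in> Ptilde p c" and z: "gmult (ehat p (c+1) c) x = gzero"
  shows "\<exists>A B. x = mk p c A B \<and> Pc p c A B \<and> (\<forall>j. 1 \<le> j \<and> j \<le> nlam (hook p (c+1)) \<longrightarrow> B j = 0)"
proof -
  have c1: "1 \<le> c" "c \<le> p - 1" and c2: "1 \<le> c+1" "c+1 \<le> p - 1" using c by auto
  obtain A B where xe: "x = mk p c A B" and P: "Pc p c A B" using x P_mem[OF c1] by blast
  have "mk p (c+1) B (\<lambda>_. 0) = gzero" using z E1[OF c, of A B] unfolding xe by simp
  hence "\<And>j. 1 \<le> j \<Longrightarrow> j \<le> nlam (hook p (c+1)) \<Longrightarrow> B j = 0" by (rule mk_eq_zero(1)[OF c2])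
  thus ?thesis using xe P by blast
qed

lemma kB_E4: assumes x: "x \<in> Ptilde p (p-1)" and z: "gmult (ehat p (p-1) (p-1)) x = gzero"
  shows "\<exists>A B. x = mk p (p-1) A B \<and> Pc p (p-1) A B \<and> (\<forall>j. 1 \<le> j \<and> j \<le> nlam (hook p (p-1+1)) \<longrightarrow> B j = 0)"
proof -
  have c1: "1 \<le> p - 1" "p - 1 \<le> p - 1" using p3 by auto
  obtain A B where xe: "x = mk p (p-1) A B" and P: "Pc p (p-1) A B" using x P_mem[OF c1] by blast
  have "mk p (p-1) (\<lambda>_. 0) (\<lambda>j. of_nat p * B j) = gzero" using z E4 unfolding xe by simp
  hence "\<And>j. 1 \<le> j \<Longrightarrow> j \<le> nlam (hook p (p-1+1)) \<Longrightarrow> of_nat p * B j = 0" by (rule mk_eq_zero(2)[OF c1])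
  hence "\<forall>j. 1 \<le> j \<and> j \<le> nlam (hook p (p-1+1)) \<longrightarrow> B j = 0" using p3 by simp
  thus ?thesis using xe P by blast
qed


lemma exA_a: assumes c: "1 \<le> c" "c \<le> p - 2"
  and ker: "\<And>x. x \<in> Ptilde p c \<Longrightarrow> g x = z \<Longrightarrow> \<exists>A B. x = mk p c A B \<and> Pc p c A B \<and> (\<forall>j. 1 \<le> j \<and> j \<le> nlam (hook p c) \<longrightarrow> A j = 0)"
  and zer: "\<And>B'. g (mk p c (\<lambda>_. 0) B') = z"
  shows "{x \<in> Ptilde p c. g x = z} = gmult (ehat p c (c+1)) ` Ptilde p (c+1)"
proof (rule exact_pat)
  have c2: "1 \<le> c+1" "c+1 \<le> p - 1" using c by auto
  fix y assume y: "y \<in> Ptilde p (c+1)"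
  show "gmult (ehat p c (c+1)) y \<in> Ptilde p c" by (rule hom_E2[OF c y])
  obtain A B where "y = mk p (c+1) A B" using y P_mem[OF c2] by blast
  thus "g (gmult (ehat p c (c+1)) y) = z" using E2[OF c] zer by simp
next
  fix x assume x: "x \<in> Ptilde p c" "g x = z"
  obtain A B where "x = mk p c A B" "Pc p c A B" "\<forall>j. 1 \<le> j \<and> j \<le> nlam (hook p c) \<longrightarrow> A j = 0"
    using ker[OF x] by blast
  thus "x \<in> gmult (ehat p c (c+1)) ` Ptilde p (c+1)" using K1a[OF c] by blast
qed

lemma exA_b:
  assumes ker: "\<And>x. x \<in> Ptilde p (p-1) \<Longrightarrow> g x = z \<Longrightarrow> \<exists>A B. x = mk p (p-1) A B \<and> Pc p (p-1) A B \<and> (\<forall>j. 1 \<le> j \<and> j \<le> nlam (hook p (p-1)) \<longrightarrow> A j = 0)"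
  and zer: "\<And>B'. g (mk p (p-1) (\<lambda>_. 0) B') = z"
  shows "{x \<in> Ptilde p (p-1). g x = z} = gmult (ehat p (p-1) (p-1)) ` Ptilde p (p-1)"
proof (rule exact_pat)
  have c1: "1 \<le> p - 1" "p - 1 \<le> p - 1" using p3 by auto
  fix y assume y: "y \<in> Ptilde p (p-1)"
  show "gmult (ehat p (p-1) (p-1)) y \<in> Ptilde p (p-1)" by (rule hom_E4[OF y])
  obtain A B where "y = mk p (p-1) A B" using y P_mem[OF c1] by blast
  thus "g (gmult (ehat p (p-1) (p-1)) y) = z" using E4 zer by simp
next
  fix x assume x: "x \<in> Ptilde p (p-1)" "g x = z"
  obtain A B where "x = mk p (p-1) A B" "Pc p (p-1) A B" "\<forall>j. 1 \<le> j \<and> j \<le> nlam (hook p (p-1)) \<longrightarrow> A j = 0"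
    using ker[OF x] by blast
  thus "x \<in> gmult (ehat p (p-1) (p-1)) ` Ptilde p (p-1)" using K1b by blast
qed

lemma exB_a: assumes c: "2 \<le> c" "c \<le> p - 1"
  and ker: "\<And>x. x \<in> Ptilde p c \<Longrightarrow> g x = z \<Longrightarrow> \<exists>A B. x = mk p c A B \<and> Pc p c A B \<and> (\<forall>j. 1 \<le> j \<and> j \<le> nlam (hook p (c+1)) \<longrightarrow> B j = 0)"
  and zer: "\<And>A'. g (mk p c A' (\<lambda>_. 0)) = z"
  shows "{x \<in> Ptilde p c. g x = z} = gmult (ehat p c (c-1)) ` Ptilde p (c-1)"
proof (rule exact_pat)
  obtain k where ck: "c = k + 1" using c by (metis add.commute le_add_diff_inverse2 le_trans one_le_numeral)
  have k: "1 \<le> k" "k \<le> p - 2" and k1: "1 \<le> k" "k \<le> p - 1" using c ck by auto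
  fix y assume y: "y \<in> Ptilde p (c-1)"
  hence y': "y \<in> Ptilde p k" using ck by simp
  show "gmult (ehat p c (c-1)) y \<in> Ptilde p c" using hom_E1[OF k y'] ck by simp
  obtain A B where "y = mk p k A B" using y' P_mem[OF k1] by blast
  thus "g (gmult (ehat p c (c-1)) y) = z" using E1[OF k] zer ck by simp
next
  fix x assume x: "x \<in> Ptilde p c" "g x = z"
  obtain A B where "x = mk p c A B" "Pc p c A B" "\<forall>j. 1 \<le> j \<and> j \<le> nlam (hook p (c+1)) \<longrightarrow> B j = 0"
    using ker[OF x] by blast
  thus "x \<in> gmult (ehat p c (c-1)) ` Ptilde p (c-1)" using K2a[OF c] by blast
qed

lemma exB_b:
  assumes ker: "\<And>x. x \<in> Ptilde p 1 \<Longrightarrow> g x = z \<Longrightarrow> \<exists>A B. x = mk p 1 A B \<and> Pc p 1 A B \<and> (\<forall>j. 1 \<le> j \<and> j \<le> nlam (hook p 2) \<longrightarrow> B j = 0)"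
  and zer: "\<And>A'. g (mk p 1 A' (\<lambda>_. 0)) = z"
  shows "{x \<in> Ptilde p 1. g x = z} = gmult (ehat p 1 1) ` Ptilde p 1"
proof (rule exact_pat)
  have c1: "1 \<le> (1::nat)" "1 \<le> p - 1" using p3 by auto
  fix y assume y: "y \<in> Ptilde p 1"
  show "gmult (ehat p 1 1) y \<in> Ptilde p 1" by (rule hom_E3[OF y])
  obtain A B where "y = mk p 1 A B" using y P_mem[OF c1] by blast
  thus "g (gmult (ehat p 1 1) y) = z" using E3 zer by simp
next
  fix x assume x: "x \<in> Ptilde p 1" "g x = z"
  obtain A B where "x = mk p 1 A B" "Pc p 1 A B" "\<forall>j. 1 \<le> j \<and> j \<le> nlam (hook p 2) \<longrightarrow> B j = 0"
    using ker[OF x] by blast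
  thus "x \<in> gmult (ehat p 1 1) ` Ptilde p 1" using K2b by blast
qed

lemma zE2: assumes c: "2 \<le> c" "c \<le> p - 1" shows "gmult (ehat p (c-1) c) (mk p c (\<lambda>_. 0) B') = gzero"
proof -
  obtain k where ck: "c = k + 1" using c by (metis add.commute le_add_diff_inverse2 le_trans one_le_numeral)
  have k: "1 \<le> k" "k \<le> p - 2" using c ck by auto
  show ?thesis using E2[OF k] mk_zero ck by simp
qed

lemma zE3: "gmult (ehat p 1 1) (mk p 1 (\<lambda>_. 0) B') = gzero" using E3 mk_zero by simp
lemma zeps: "epshat p (mk p 1 (\<lambda>_. 0) B') = 0" using epshat_mk by simp
lemma zE1: assumes c: "1 \<le> c" "c \<le> p - 2" shows "gmult (ehat p (c+1) c) (mk p c A' (\<lambda>_. 0)) = gzero"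
  using E1[OF c] mk_zero by simp
lemma zE4: "gmult (ehat p (p-1) (p-1)) (mk p (p-1) A' (\<lambda>_. 0)) = gzero" using E4 mk_zero by simp

end

context PP begin

lemma kB_E1_1: assumes "x \<in> Ptilde p 1" "gmult (ehat p 2 1) x = gzero"
  shows "\<exists>A B. x = mk p 1 A B \<and> Pc p 1 A B \<and> (\<forall>j. 1 \<le> j \<and> j \<le> nlam (hook p 2) \<longrightarrow> B j = 0)"
proof -
  have c1: "1 \<le> (1::nat)" "1 \<le> p - 2" using p3 by auto
  have two: "(2::nat) = 1 + 1" by simp
  show ?thesis using kB_E1[OF c1] assms unfolding two by blast
qed

lemma zE1_1: "gmult (ehat p 2 1) (mk p 1 A' (\<lambda>_. 0)) = gzero"
proof -
  have c1: "1 \<le> (1::nat)" "1 \<le> p - 2" using p3 by auto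
  have two: "(2::nat) = 1 + 1" by simp
  show ?thesis unfolding two by (rule zE1[OF c1])
qed

lemma exact_i: assumes i: "i \<ge> 1"
  shows "{x \<in> Ptilde p (omega p i). gmult (dhat p i) x = gzero}
           = gmult (dhat p (i + 1)) ` Ptilde p (omega p (i + 1))"
proof -
  have d: "dhat p i = ehat p (omega p (i-1)) (omega p i)" "dhat p (i+1) = ehat p (omega p i) (omega p (i+1))"
    unfolding dhat_def by simp_all
  have two: "(2::nat) = 1 + 1" by simp
  from omega_triple[OF i] show ?thesis
  proof (elim disjE exE conjE)
    assume h: "omega p (i - 1) = 1" "omega p i = 1" "omega p (i + 1) = 2"
    have c: "1 \<le> (1::nat)" "1 \<le> p - 2" using p3 by auto
    have "{x \<in> Ptilde p 1. gmult (ehat p 1 1) x = gzero} = gmult (ehat p 1 (1+1)) ` Ptilde p (1+1)"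
      apply (rule exA_a[OF c])
      apply (erule kA_E3)
      apply assumption
      apply (rule zE3)
      done
    thus ?thesis unfolding d h by (simp add: numeral_2_eq_2)
  next
    fix c assume h: "2 \<le> c" "c \<le> p - 2" "omega p (i - 1) = c - 1" "omega p i = c" "omega p (i + 1) = c + 1"
    have c1: "1 \<le> c" "c \<le> p - 2" and c2: "2 \<le> c" "c \<le> p - 1" using h by auto
    show ?thesis unfolding d h(3-5)
      by (rule exA_a[OF c1], erule kA_E2[OF c2], assumption, rule zE2[OF c2])
  next
    assume h: "omega p (i - 1) = p - 2" "omega p i = p - 1" "omega p (i + 1) = p - 1"
    have c2: "2 \<le> p - 1" "p - 1 \<le> p - 1" using p3 by auto
    have pm: "p - 2 = p - 1 - 1" by simp
    show ?thesis unfolding d h pm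
      by (rule exA_b, erule kA_E2[OF c2], assumption, rule zE2[OF c2])
  next
    assume h: "omega p (i - 1) = p - 1" "omega p i = p - 1" "omega p (i + 1) = p - 2"
    have c2: "2 \<le> p - 1" "p - 1 \<le> p - 1" using p3 by auto
    have pm: "p - 2 = p - 1 - 1" by simp
    show ?thesis unfolding d h pm
      by (rule exB_a[OF c2], erule kB_E4, assumption, rule zE4)
  next
    fix c assume h: "2 \<le> c" "c \<le> p - 2" "omega p (i - 1) = c + 1" "omega p i = c" "omega p (i + 1) = c - 1"
    have c1: "1 \<le> c" "c \<le> p - 2" and c2: "2 \<le> c" "c \<le> p - 1" using h by auto
    show ?thesis unfolding d h(3-5)
      by (rule exB_a[OF c2], erule kB_E1[OF c1], assumption, rule zE1[OF c1])
  next
    assume h: "omega p (i - 1) = 2" "omega p i = 1" "omega p (i + 1) = 1"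
    have c1: "1 \<le> (1::nat)" "1 \<le> p - 2" using p3 by auto
    show ?thesis unfolding d h
      by (rule exB_b, erule kB_E1_1, assumption, rule zE1_1)
  qed
qed

lemma exact_eps: "{x \<in> Ptilde p (omega p 0). epshat p x = 0} = gmult (dhat p 1) ` Ptilde p (omega p 1)"
proof -
  have d: "dhat p 1 = ehat p 1 (1+1)" "omega p 1 = 1 + 1" unfolding dhat_def using omega01 by (simp_all add: numeral_2_eq_2)
  have c: "1 \<le> (1::nat)" "1 \<le> p - 2" using p3 by auto
  show ?thesis unfolding d omega01(1)
    by (rule exA_a[OF c], erule kA_eps, assumption, rule zeps)
qed

lemma Zp_rmod: "is_rmod p (Zp p) (+) 0 (trivact p)"
proof -
  have n1: "nlam (hook p 1) = 1" by (rule Nfacts(1))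
  have hp: "hook p 1 \<in> partitions p" using hook_part[of 1 p] p3 by simp
  have mult1: "gmult r s (hook p 1) 1 1 = r (hook p 1) 1 1 * s (hook p 1) 1 1" for r s
    unfolding gmult_def n1 by simp
  have Z: "x \<in> Zp p \<longleftrightarrow> zp p x" for x unfolding Zp_def by simp
  have 1: "0 \<in> Zp p" using Z by simp
  have 2: "\<forall>x\<in>Zp p. \<forall>y\<in>Zp p. x + y \<in> Zp p" using Z zp_add by blast
  have 3: "\<forall>x\<in>Zp p. \<forall>y\<in>Zp p. \<forall>w\<in>Zp p. x + y + w = x + (y + w)" by (simp add: add.assoc)
  have 4: "\<forall>x\<in>Zp p. \<forall>y\<in>Zp p. x + y = y + x" by (simp add: add.commute)
  have 5: "\<forall>x\<in>Zp p. 0 + x = x" by simp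
  have 6: "\<forall>x\<in>Zp p. \<exists>y\<in>Zp p. x + y = 0"
  proof
    fix x assume "x \<in> Zp p" hence "- x \<in> Zp p" using Z zp_uminus by blast
    thus "\<exists>y\<in>Zp p. x + y = 0" by (metis add.right_inverse)
  qed
  have 7: "\<forall>x\<in>Zp p. \<forall>r\<in>Lam p. trivact p x r \<in> Zp p"
    unfolding trivact_def using Z Lam_props(2) zp_mult by blast
  have 8: "\<forall>x\<in>Zp p. \<forall>r\<in>Lam p. \<forall>s\<in>Lam p. trivact p x (gadd r s) = trivact p x r + trivact p x s"
    unfolding trivact_def gadd_def by (simp add: distrib_left)
  have 9: "\<forall>x\<in>Zp p. \<forall>y\<in>Zp p. \<forall>r\<in>Lam p. trivact p (x + y) r = trivact p x r + trivact p y r"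
    unfolding trivact_def by (simp add: distrib_right)
  have 10: "\<forall>x\<in>Zp p. \<forall>r\<in>Lam p. \<forall>s\<in>Lam p. trivact p x (gmult r s) = trivact p (trivact p x r) s"
    unfolding trivact_def mult1 by (simp add: mult.assoc)
  have 11: "\<forall>x\<in>Zp p. trivact p x (gone p) = x" unfolding trivact_def gone_def using hp n1 by simp
  show ?thesis unfolding is_rmod_def by (rule conjI[OF 1 conjI[OF 2 conjI[OF 3 conjI[OF 4 conjI[OF 5 conjI[OF 6 conjI[OF 7 conjI[OF 8 conjI[OF 9 conjI[OF 10 11]]]]]]]]]])
qed

lemma eps_hom: "is_rhom p (Ptilde p (omega p 0)) gadd gmult (Zp p) (+) (trivact p) (epshat p)"
  unfolding is_rhom_def omega01(1)
proof (intro conjI ballI)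
  have c1: "1 \<le> (1::nat)" "1 \<le> p - 1" using p3 by auto
  have n1: "nlam (hook p 1) = 1" by (rule Nfacts(1))
  fix x assume x: "x \<in> Ptilde p 1"
  obtain A B where xe: "x = mk p 1 A B" and P: "Pc p 1 A B" using x P_mem[OF c1] by blast
  have "zp p (A 1)" using P n1 unfolding Pc_def by simp
  thus "epshat p x \<in> Zp p" unfolding xe epshat_mk Zp_def by simp
  fix y show "epshat p (gadd x y) = epshat p x + epshat p y" unfolding epshat_def gadd_def by simp
next
  fix x r
  have n1: "nlam (hook p 1) = 1" by (rule Nfacts(1))
  show "epshat p (gmult x r) = trivact p (epshat p x) r"
    unfolding epshat_def trivact_def gmult_def n1 by simp
qed

lemma eps_surj: "epshat p ` Ptilde p (omega p 0) = Zp p"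
proof
  show "epshat p ` Ptilde p (omega p 0) \<subseteq> Zp p" using rhomD(1)[OF eps_hom] by blast
  show "Zp p \<subseteq> epshat p ` Ptilde p (omega p 0)"
  proof
    fix q assume q: "q \<in> Zp p"
    have c1: "1 \<le> (1::nat)" "1 \<le> p - 1" using p3 by auto
    define B where "B = (\<lambda>j::nat. if j = 1 then q else 0)"
    have zq: "zp p q" using q unfolding Zp_def by simp
    have "Pc p 1 (\<lambda>_. q) B" unfolding Pc_def B_def using zq Nfacts Nfacts(8)[unfolded numeral_2_eq_2]
      by (auto intro: congp_refl)
    hence "mk p 1 (\<lambda>_. q) B \<in> Ptilde p 1" using P_mem[OF c1] by blast
    moreover have "epshat p (mk p 1 (\<lambda>_. q) B) = q" by (rule epshat_mk)
    ultimately show "q \<in> epshat p ` Ptilde p (omega p 0)" unfolding omega01(1) by (metis image_eqI)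
  qed
qed

lemma main:
  shows
    "(\<forall>k \<in> {1..p-1}. projective_rmod TYPE('m) p (Ptilde p k) gadd gzero gmult)
     \<and> is_rmod p (Zp p) (+) 0 (trivact p)
     \<and> (\<forall>i \<ge> 1. is_rhom p (Ptilde p (omega p i)) gadd gmult
                        (Ptilde p (omega p (i - 1))) gadd gmult (gmult (dhat p i)))
     \<and> is_rhom p (Ptilde p (omega p 0)) gadd gmult (Zp p) (+) (trivact p) (epshat p)
     \<and> epshat p ` Ptilde p (omega p 0) = Zp p
     \<and> {x \<in> Ptilde p (omega p 0). epshat p x = 0} = gmult (dhat p 1) ` Ptilde p (omega p 1)
     \<and> (\<forall>i \<ge> 1. {x \<in> Ptilde p (omega p i). gmult (dhat p i) x = gzero}
                 = gmult (dhat p (i + 1)) ` Ptilde p (omega p (i + 1)))"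
  using proj_P Zp_rmod dhat_hom eps_hom eps_surj exact_eps exact_i by auto

end


theorem mainTheorem2:
  fixes p :: nat
  assumes "prime p" and "3 \<le> p"
  shows
    "(\<forall>k \<in> {1..p-1}. projective_rmod TYPE('m) p (Ptilde p k) gadd gzero gmult)
     \<and> is_rmod p (Zp p) (+) 0 (trivact p)
     \<and> (\<forall>i \<ge> 1. is_rhom p (Ptilde p (omega p i)) gadd gmult
                        (Ptilde p (omega p (i - 1))) gadd gmult (gmult (dhat p i)))
     \<and> is_rhom p (Ptilde p (omega p 0)) gadd gmult (Zp p) (+) (trivact p) (epshat p)
     \<and> epshat p ` Ptilde p (omega p 0) = Zp p
     \<and> {x \<in> Ptilde p (omega p 0). epshat p x = 0} = gmult (dhat p 1) ` Ptilde p (omega p 1)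
     \<and> (\<forall>i \<ge> 1. {x \<in> Ptilde p (omega p i). gmult (dhat p i) x = gzero}
                 = gmult (dhat p (i + 1)) ` Ptilde p (omega p (i + 1)))"
proof -
  interpret PP p using assms(2) by unfold_locales
  show ?thesis by (rule main)
qed

end
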